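(* Let $\mathbf{B}$ (resp. $\mathbf{B}^{nc}$) be the gap-insertion incidence bialgebra of set partitions (resp. of noncrossing partitions), and $\mathbf{H}$ (resp. $\mathbf{H}^{nc}$) its connected quotient, as defined in the context. The linear map $\operatorname{nc}^*$ defined on noncrossing partitions by $$\operatorname{nc}^*(P)=\sum_{P'\,:\,\operatorname{nc}(P')=P}P'$$ (the sum over all set partitions $P'$ of the same degree as $P$ whose noncrossing closure is $P$; in particular $\operatorname{nc}^*(\emptyset)=\emptyset$), extended multiplicatively, is a bialgebra homomorphism $\mathbf{B}^{nc}\to\mathbf{B}$, and it induces a bialgebra homomorphism $\mathbf{H}^{nc}\to\mathbf{H}$.
   Context: A partition of degree $n$ is a set partition of $[n]$ into nonempty blocks (degree $0$: only the empty partition $\emptyset$); partitions of finite linearly ordered sets are identified with partitions of $[n]$ via the order-preserving bijection; for $X\subset[n]$, $P_{|X}$ is the induced partition of $X$ (nonempty intersections of blocks with $X$). A partition is noncrossing if there are no $a<c<b<d$ with $a,b$ in one block and $c,d$ in another. The noncrossing closure $\operatorname{nc}(P)$ is the finest noncrossing partition coarser than $P$. For finite $X\subset\mathbb{N}$, $\operatorname{Conv}(X)=\{\min X,\dots,\max X\}$. On the set of blocks of a partition $P$ let $\pi\to\rho$ iff $\operatorname{Conv}(\pi)\cap\rho\neq\emptyset$, and take the transitive closure. An upperset is a set $U$ of blocks with ($\pi\in U$, $\pi\to\rho$) $\Rightarrow\rho\in U$; a lowerset is a set $L$ with ($\pi\in L$, $\sigma\to\pi$) $\Rightarrow\sigma\in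 L$. A cut $(L,U)$ of $P$ is a splitting of the blocks into a lowerset $L$ and its complement $U$ (an upperset). We identify $L$ with the partition $P$ restricted to the union of its blocks. If $x_1<\dots<x_k$ are the elements of this union, put $D_0=\{y<x_1\}$, $D_i=\{x_i<y<x_{i+1}\}$ ($0<i<k$), $D_k=\{y>x_k\}$ (if $k=0$, $D_0=[n]$), and $U_i=P_{|D_i}$ (possibly empty). $\mathbf{B}$ is the free associative unital algebra generated by all set partitions including $\emptyset$ (a generator distinct from the unit $\mathbf{1}$), with coproduct $\Delta_0(P)=\sum_{(L,U)\text{ cut of }P}L\otimes U_0U_1\cdots U_k$ extended multiplicatively, and counit $\varepsilon(\emptyset)=1$, $\varepsilon(P)=0$ for $P$ nonempty. $\mathbf{H}$ is the quotient of $\mathbf{B}$ by the ideal generated by $\emptyset-\mathbf{1}$ (free associative algebra on nonempty partitions), with coproduct $\Delta(P)=\sum_{(L,U)}L\otimes\overline U$, where $\overline U$ is the product, in order, of the nonempty $U_i$. $\mathbf{B}^{nc}$ and $\mathbf{H}^{nc}$ are the sub-bialgebras spanned by monomials of noncrossing partitions. *)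

theory Defs
  imports "HOL-Library.Disjoint_Sets" "HOL-Library.Poly_Mapping"
begin

text \<open>A set partition is represented by its set of blocks. A partition of degree n
is a partition of {1..n}; the empty partition (degree 0) is the empty set of blocks.\<close>

type_synonym setpart = "nat set set"

definition is_part_of :: "nat \<Rightarrow> setpart \<Rightarrow> bool" where
  "is_part_of n P \<longleftrightarrow> partition_on {1..n} P"

definition is_part :: "setpart \<Rightarrow> bool" where
  "is_part P \<longleftrightarrow> (\<exists>n. is_part_of n P)"

definition degree :: "setpart \<Rightarrow> nat" where
  "degree P = card (\<Union>P)"

definition induced :: "setpart \<Rightarrow> nat set \<Rightarrow> setpart" where
  "induced P X = {b \<inter> X | b. b \<in> P \<and> b \<inter> X \<noteq> {}}"

text \<open>Standardisation: a partition of a finite set of naturals is identified with a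
partition of {1..k} via the order preserving bijection.\<close>
definition rank_in :: "nat set \<Rightarrow> nat \<Rightarrow> nat" where
  "rank_in X x = card {y \<in> X. y \<le> x}"

definition std :: "setpart \<Rightarrow> setpart" where
  "std P = (\<lambda>b. rank_in (\<Union>P) ` b) ` P"

definition noncrossing :: "setpart \<Rightarrow> bool" where
  "noncrossing P \<longleftrightarrow> \<not> (\<exists>B1\<in>P. \<exists>B2\<in>P. B1 \<noteq> B2 \<and>
      (\<exists>a b c d. a < c \<and> c < b \<and> b < d \<and> a \<in> B1 \<and> b \<in> B1 \<and> c \<in> B2 \<and> d \<in> B2))"

definition finer :: "setpart \<Rightarrow> setpart \<Rightarrow> bool" where
  "finer P Q \<longleftrightarrow> (\<forall>b\<in>P. \<exists>c\<in>Q. b \<subseteq> c)"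

definition nc_closure :: "setpart \<Rightarrow> setpart" where
  "nc_closure P = (THE Q. partition_on (\<Union>P) Q \<and> noncrossing Q \<and> finer P Q \<and>
      (\<forall>Q'. partition_on (\<Union>P) Q' \<and> noncrossing Q' \<and> finer P Q' \<longrightarrow> finer Q Q'))"

definition conv :: "nat set \<Rightarrow> nat set" where
  "conv X = {Min X..Max X}"

definition arrow :: "setpart \<Rightarrow> (nat set \<times> nat set) set" where
  "arrow P = {(\<pi>, \<rho>). \<pi> \<in> P \<and> \<rho> \<in> P \<and> conv \<pi> \<inter> \<rho> \<noteq> {}}"

definition upperset :: "setpart \<Rightarrow> nat set set \<Rightarrow> bool" where
  "upperset P U \<longleftrightarrow> U \<subseteq> P \<and> (\<forall>\<pi>\<in>U. \<forall>\<rho>. (\<pi>, \<rho>) \<in> (arrow P)\<^sup>+ \<longrightarrow> \<rho> \<in> U)"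

definition lowerset :: "setpart \<Rightarrow> nat set set \<Rightarrow> bool" where
  "lowerset P L \<longleftrightarrow> L \<subseteq> P \<and> (\<forall>\<pi>\<in>L. \<forall>\<sigma>. (\<sigma>, \<pi>) \<in> (arrow P)\<^sup>+ \<longrightarrow> \<sigma> \<in> L)"

text \<open>A cut (L, U) is represented by its lower part L; U = P - L.\<close>
definition cuts :: "setpart \<Rightarrow> nat set set set" where
  "cuts P = {L. lowerset P L \<and> upperset P (P - L)}"

definition gaps :: "nat \<Rightarrow> nat set \<Rightarrow> nat set list" where
  "gaps n X = (let xs = sorted_list_of_set X; k = length xs in
     map (\<lambda>i. {y \<in> {1..n}. (i = 0 \<or> xs ! (i - 1) < y) \<and> (i = k \<or> y < xs ! i)}) [0..<k+1])"

definition upper_parts :: "setpart \<Rightarrow> nat set set \<Rightarrow> setpart list" where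
  "upper_parts P L = map (\<lambda>D. std (induced P D)) (gaps (degree P) (\<Union>L))"

text \<open>An element of the free associative algebra generated by partitions is a finitely
supported coefficient function on words (lists) of generators. The unit is the empty word;
the generator \<emptyset> is the one-letter word [{}]. Elements of the tensor square are finitely
supported functions on pairs of words.\<close>

type_synonym 'k alg = "setpart list \<Rightarrow>\<^sub>0 'k"
type_synonym 'k alg2 = "(setpart list \<times> setpart list) \<Rightarrow>\<^sub>0 'k"

definition scale :: "'k::comm_ring_1 \<Rightarrow> ('a \<Rightarrow>\<^sub>0 'k) \<Rightarrow> ('a \<Rightarrow>\<^sub>0 'k)" where
  "scale c x = Poly_Mapping.map (\<lambda>v. c * v) x"

definition lin :: "('a \<Rightarrow> ('b \<Rightarrow>\<^sub>0 'k::comm_ring_1)) \<Rightarrow> ('a \<Rightarrow>\<^sub>0 'k) \<Rightarrow> ('b \<Rightarrow>\<^sub>0 'k)" where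
  "lin F x = (\<Sum>w\<in>Poly_Mapping.keys x. scale (Poly_Mapping.lookup x w) (F w))"

definition mon :: "'a \<Rightarrow> ('a \<Rightarrow>\<^sub>0 'k::comm_ring_1)" where
  "mon w = Poly_Mapping.single w 1"

definition wmult :: "'k::comm_ring_1 alg \<Rightarrow> 'k alg \<Rightarrow> 'k alg" where
  "wmult x y = (\<Sum>u\<in>Poly_Mapping.keys x. \<Sum>v\<in>Poly_Mapping.keys y. Poly_Mapping.single (u @ v) (Poly_Mapping.lookup x u * Poly_Mapping.lookup y v))"

definition tmult :: "'k::comm_ring_1 alg2 \<Rightarrow> 'k alg2 \<Rightarrow> 'k alg2" where
  "tmult x y = (\<Sum>u\<in>Poly_Mapping.keys x. \<Sum>v\<in>Poly_Mapping.keys y.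
      Poly_Mapping.single (fst u @ fst v, snd u @ snd v) (Poly_Mapping.lookup x u * Poly_Mapping.lookup y v))"

definition tensor :: "'k::comm_ring_1 alg \<Rightarrow> 'k alg \<Rightarrow> 'k alg2" where
  "tensor a b = (\<Sum>u\<in>Poly_Mapping.keys a. \<Sum>v\<in>Poly_Mapping.keys b. Poly_Mapping.single (u, v) (Poly_Mapping.lookup a u * Poly_Mapping.lookup b v))"

definition wprod :: "'k::comm_ring_1 alg list \<Rightarrow> 'k alg" where
  "wprod xs = foldr wmult xs (mon [])"

definition tprod :: "'k::comm_ring_1 alg2 list \<Rightarrow> 'k alg2" where
  "tprod xs = foldr tmult xs (mon ([], []))"

definition tmap :: "('k::comm_ring_1 alg \<Rightarrow> 'k alg) \<Rightarrow> 'k alg2 \<Rightarrow> 'k alg2" where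
  "tmap f z = lin (\<lambda>(u, v). tensor (f (mon u)) (f (mon v))) z"

definition Bset :: "'k::comm_ring_1 alg set" where
  "Bset = {x. \<forall>w\<in>Poly_Mapping.keys x. \<forall>P\<in>set w. is_part P}"

definition Bnc :: "'k::comm_ring_1 alg set" where
  "Bnc = {x. \<forall>w\<in>Poly_Mapping.keys x. \<forall>P\<in>set w. is_part P \<and> noncrossing P}"

definition cop0_gen :: "setpart \<Rightarrow> 'k::comm_ring_1 alg2" where
  "cop0_gen P = (\<Sum>L\<in>cuts P. Poly_Mapping.single ([std L], upper_parts P L) 1)"

definition cop0 :: "'k::comm_ring_1 alg \<Rightarrow> 'k alg2" where
  "cop0 x = lin (\<lambda>w. tprod (map cop0_gen w)) x"

definition counit0 :: "'k::comm_ring_1 alg \<Rightarrow> 'k" where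
  "counit0 x = (\<Sum>w\<in>Poly_Mapping.keys x. Poly_Mapping.lookup x w * (if (\<forall>P\<in>set w. P = {}) then 1 else 0))"

text \<open>H is the free algebra on nonempty partitions (words without the letter {}); the
quotient map B \<rightarrow> H sends \<emptyset> to the unit, i.e. deletes the letters {}.\<close>

definition Hset :: "'k::comm_ring_1 alg set" where
  "Hset = {x. \<forall>w\<in>Poly_Mapping.keys x. \<forall>P\<in>set w. is_part P \<and> P \<noteq> {}}"

definition Hnc :: "'k::comm_ring_1 alg set" where
  "Hnc = {x. \<forall>w\<in>Poly_Mapping.keys x. \<forall>P\<in>set w. is_part P \<and> P \<noteq> {} \<and> noncrossing P}"

definition quot :: "'k::comm_ring_1 alg \<Rightarrow> 'k alg" where
  "quot x = lin (\<lambda>w. mon (filter (\<lambda>P. P \<noteq> {}) w)) x"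

definition cop_gen :: "setpart \<Rightarrow> 'k::comm_ring_1 alg2" where
  "cop_gen P = (\<Sum>L\<in>cuts P.
     Poly_Mapping.single (filter (\<lambda>Q. Q \<noteq> {}) [std L], filter (\<lambda>Q. Q \<noteq> {}) (upper_parts P L)) 1)"

definition cop :: "'k::comm_ring_1 alg \<Rightarrow> 'k alg2" where
  "cop x = lin (\<lambda>w. tprod (map cop_gen w)) x"

definition counit :: "'k::comm_ring_1 alg \<Rightarrow> 'k" where
  "counit x = (\<Sum>w\<in>Poly_Mapping.keys x. Poly_Mapping.lookup x w * (if w = [] then 1 else 0))"

definition ncstar_gen :: "setpart \<Rightarrow> 'k::comm_ring_1 alg" where
  "ncstar_gen P = (\<Sum>P'\<in>{P'. is_part_of (degree P) P' \<and> nc_closure P' = P}. mon [P'])"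

definition ncstar :: "'k::comm_ring_1 alg \<Rightarrow> 'k alg" where
  "ncstar x = lin (\<lambda>w. wprod (map ncstar_gen w)) x"

definition bialg_hom ::
  "'k::comm_ring_1 alg set \<Rightarrow> ('k alg \<Rightarrow> 'k alg \<Rightarrow> 'k alg) \<Rightarrow> 'k alg \<Rightarrow> ('k alg \<Rightarrow> 'k alg2) \<Rightarrow> ('k alg \<Rightarrow> 'k)
   \<Rightarrow> 'k alg set \<Rightarrow> ('k alg \<Rightarrow> 'k alg \<Rightarrow> 'k alg) \<Rightarrow> 'k alg \<Rightarrow> ('k alg \<Rightarrow> 'k alg2) \<Rightarrow> ('k alg \<Rightarrow> 'k)
   \<Rightarrow> ('k alg \<Rightarrow> 'k alg) \<Rightarrow> bool" where
  "bialg_hom A mA eA cA uA B mB eB cB uB f \<longleftrightarrow>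
     (\<forall>x\<in>A. f x \<in> B) \<and>
     (\<forall>x\<in>A. \<forall>y\<in>A. f (x + y) = f x + f y) \<and>
     (\<forall>x\<in>A. \<forall>c. f (scale c x) = scale c (f x)) \<and>
     f eA = eB \<and>
     (\<forall>x\<in>A. \<forall>y\<in>A. f (mA x y) = mB (f x) (f y)) \<and>
     (\<forall>x\<in>A. cB (f x) = tmap f (cA x)) \<and>
     (\<forall>x\<in>A. uB (f x) = uA x)"

end

theory Submission
  imports Defs
begin

definition isnc :: "setpart \<Rightarrow> setpart \<Rightarrow> bool" where
 "isnc P Q \<longleftrightarrow> partition_on (\<Union>P) Q \<and> noncrossing Q \<and> finer P Q \<and>
      (\<forall>Q'. partition_on (\<Union>P) Q' \<and> noncrossing Q' \<and> finer P Q' \<longrightarrow> finer Q Q')"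

lemma nc_closure_isnc: "nc_closure P = (THE Q. isnc P Q)"
  unfolding nc_closure_def isnc_def ..

lemma isnc_unique: "isnc P Q1 \<Longrightarrow> isnc P Q2 \<Longrightarrow> Q1 = Q2"
  unfolding isnc_def
  by (metis refines_asym refines_def finer_def)

lemma noncrossingD:
  assumes "noncrossing Q" "B1 \<in> Q" "B2 \<in> Q" "a < c" "c < b" "b < d"
    "a \<in> B1" "b \<in> B1" "c \<in> B2" "d \<in> B2"
  shows "B1 = B2"
proof (rule ccontr)
  assume "B1 \<noteq> B2"
  with assms have "\<exists>B1\<in>Q. \<exists>B2\<in>Q. B1 \<noteq> B2 \<and>
      (\<exists>a b c d. a < c \<and> c < b \<and> b < d \<and> a \<in> B1 \<and> b \<in> B1 \<and> c \<in> B2 \<and> d \<in> B2)"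
    by metis
  then show False using assms(1) unfolding noncrossing_def by simp
qed

lemma noncrossingI:
  assumes "\<And>B1 B2 a b c d. B1 \<in> Q \<Longrightarrow> B2 \<in> Q \<Longrightarrow> a < c \<Longrightarrow> c < b \<Longrightarrow> b < d \<Longrightarrow>
    a \<in> B1 \<Longrightarrow> b \<in> B1 \<Longrightarrow> c \<in> B2 \<Longrightarrow> d \<in> B2 \<Longrightarrow> B1 = B2"
  shows "noncrossing Q"
  unfolding noncrossing_def using assms by metis

lemma part_ne: "partition_on A P \<Longrightarrow> b \<in> P \<Longrightarrow> \<exists>x. x \<in> b"
  by (metis ex_in_conv partition_onD3)

lemma part_sub: "partition_on A P \<Longrightarrow> b \<in> P \<Longrightarrow> b \<subseteq> A"
  using partition_onD1 by fastforce

lemma part_blockI: "partition_on A P \<Longrightarrow> x \<in> A \<Longrightarrow> \<exists>c\<in>P. x \<in> c"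
  by (auto simp: partition_on_def)

lemma part_disj: "partition_on A P \<Longrightarrow> c1 \<in> P \<Longrightarrow> c2 \<in> P \<Longrightarrow> x \<in> c1 \<Longrightarrow> x \<in> c2 \<Longrightarrow> c1 = c2"
  by (auto simp: partition_on_def disjoint_def)

lemma isnc_exists:
  assumes P: "partition_on A P"
  shows "\<exists>Q. isnc P Q"
proof -
  have A: "\<Union>P = A" using P by (simp add: partition_on_def)
  define F where "F = {Q. partition_on A Q \<and> noncrossing Q \<and> finer P Q}"
  define r where "r = {(x,y). x \<in> A \<and> y \<in> A \<and> (\<forall>Q\<in>F. \<exists>c\<in>Q. x \<in> c \<and> y \<in> c)}"
  have eq: "equiv A r"
  proof (rule equivI)
    show "r \<subseteq> A \<times> A" unfolding r_def by auto
    show "refl_on A r" unfolding refl_on_def r_def F_def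
      using part_blockI by fastforce
    show "sym r" unfolding sym_def r_def by blast
    show "trans r"
    proof (rule transI)
      fix x y z assume xy: "(x,y) \<in> r" and yz: "(y,z) \<in> r"
      have "\<exists>c\<in>Q. x \<in> c \<and> z \<in> c" if QF: "Q \<in> F" for Q
      proof -
        obtain c1 where "c1 \<in> Q" "x \<in> c1" "y \<in> c1" using xy QF unfolding r_def by blast
        moreover obtain c2 where "c2 \<in> Q" "y \<in> c2" "z \<in> c2" using yz QF unfolding r_def by blast
        moreover have "partition_on A Q" using QF unfolding F_def by blast
        ultimately show ?thesis using part_disj[of A Q c1 c2 y] by auto
      qed
      then show "(x,z) \<in> r" using xy yz unfolding r_def by auto
    qed
  qed
  define Q0 where "Q0 = A // r"
  have pQ0: "partition_on A Q0" unfolding Q0_def by (rule partition_on_quotient[OF eq])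
  have cls: "\<And>B. B \<in> Q0 \<Longrightarrow> x \<in> B \<Longrightarrow> y \<in> B \<Longrightarrow> (x,y) \<in> r" for x y
    unfolding Q0_def using eq apply (auto elim!: quotientE)
    by (meson equivE symD transD)
  have cls2: "\<And>B. B \<in> Q0 \<Longrightarrow> x \<in> B \<Longrightarrow> (x,y) \<in> r \<Longrightarrow> y \<in> B" for x y
    unfolding Q0_def using eq apply (auto elim!: quotientE)
    by (meson equivE transD)
  have nc: "noncrossing Q0"
  proof (rule noncrossingI, rule ccontr)
    fix B1 B2 a b c d
    assume B: "B1 \<in> Q0" "B2 \<in> Q0" "B1 \<noteq> B2" and o: "a < c" "c < b" "b < d"
      and m: "a \<in> B1" "b \<in> B1" "c \<in> B2" "d \<in> B2"
    have ab: "(a,b) \<in> r" and cd: "(c,d) \<in> r" using cls B m by auto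
    have "(a,c) \<in> r"
    proof -
      have "\<forall>Q\<in>F. \<exists>e\<in>Q. a \<in> e \<and> c \<in> e"
      proof
        fix Q assume QF: "Q \<in> F"
        obtain e1 where e1: "e1 \<in> Q" "a \<in> e1" "b \<in> e1" using ab QF unfolding r_def by auto
        obtain e2 where e2: "e2 \<in> Q" "c \<in> e2" "d \<in> e2" using cd QF unfolding r_def by auto
        have "noncrossing Q" using QF unfolding F_def by blast
        then have "e1 = e2" using noncrossingD[OF _ e1(1) e2(1) o] e1 e2 by blast
        then show "\<exists>e\<in>Q. a \<in> e \<and> c \<in> e" using e1 e2 by auto
      qed
      then show ?thesis using ab cd unfolding r_def by auto
    qed
    then have "c \<in> B1" using cls2 B m by blast
    then show False using B m pQ0 part_disj by metis
  qed
  have fin: "finer P Q0"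
    unfolding finer_def
  proof
    fix b assume b: "b \<in> P"
    then obtain x where x: "x \<in> b" using P part_ne by blast
    have xA: "x \<in> A" using b x A by auto
    obtain B where B: "B \<in> Q0" "x \<in> B" using part_blockI[OF pQ0 xA] by auto
    have "b \<subseteq> B"
    proof
      fix y assume y: "y \<in> b"
      have "(x,y) \<in> r"
      proof -
        have "\<exists>e\<in>Q. x \<in> e \<and> y \<in> e" if "Q \<in> F" for Q
          using that b x y unfolding F_def finer_def by blast
        then show ?thesis unfolding r_def using xA y b A by auto
      qed
      then show "y \<in> B" using cls2 B by blast
    qed
    then show "\<exists>c\<in>Q0. b \<subseteq> c" using B by blast
  qed
  have minl: "finer Q0 Q'" if Q': "partition_on A Q'" "noncrossing Q'" "finer P Q'" for Q'
    unfolding finer_def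
  proof
    fix B assume B: "B \<in> Q0"
    then obtain x where x: "x \<in> B" using pQ0 part_ne by blast
    have xA: "x \<in> A" using B x pQ0 part_sub by blast
    obtain c where c: "c \<in> Q'" "x \<in> c" using part_blockI[OF Q'(1) xA] by auto
    have "B \<subseteq> c"
    proof
      fix y assume "y \<in> B"
      then have "(x,y) \<in> r" using cls B x by blast
      then obtain e where "e \<in> Q'" "x \<in> e" "y \<in> e" using Q' unfolding r_def F_def by auto
      then show "y \<in> c" using part_disj[OF Q'(1)] c by metis
    qed
    then show "\<exists>c\<in>Q'. B \<subseteq> c" using c by blast
  qed
  have "isnc P Q0" unfolding isnc_def A using pQ0 nc fin minl by simp
  then show ?thesis by (rule exI)
qed

lemma nc_closure_eq:
  assumes "partition_on A P"
  shows "nc_closure P = Q \<longleftrightarrow> isnc P Q"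
proof -
  obtain Q0 where Q0: "isnc P Q0" using isnc_exists[OF assms] by blast
  have "nc_closure P = Q0" unfolding nc_closure_isnc
    by (rule the_equality[where P="isnc P", OF Q0]) (rule isnc_unique[OF _ Q0])
  then show ?thesis using Q0 isnc_unique by blast
qed

definition sepd :: "nat set \<Rightarrow> nat set list \<Rightarrow> bool" where
 "sepd A Xs \<longleftrightarrow> (\<forall>i<length Xs. Xs!i \<subseteq> A) \<and> (\<forall>x\<in>A. \<exists>i<length Xs. x \<in> Xs!i) \<and>
    (\<forall>i<length Xs. \<forall>j<length Xs. i \<noteq> j \<longrightarrow> Xs!i \<inter> Xs!j = {}) \<and>
    (\<forall>i<length Xs. \<forall>j<length Xs. \<forall>a b c d. a < c \<longrightarrow> c < b \<longrightarrow> b < d \<longrightarrow>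
       a \<in> Xs!i \<longrightarrow> b \<in> Xs!i \<longrightarrow> c \<in> Xs!j \<longrightarrow> d \<in> Xs!j \<longrightarrow> i = j)"

lemma sepdD1: "sepd A Xs \<Longrightarrow> i < length Xs \<Longrightarrow> Xs!i \<subseteq> A"
  unfolding sepd_def by blast
lemma sepdD2: "sepd A Xs \<Longrightarrow> x \<in> A \<Longrightarrow> \<exists>i<length Xs. x \<in> Xs!i"
  unfolding sepd_def by blast
lemma sepdD3: "sepd A Xs \<Longrightarrow> i < length Xs \<Longrightarrow> j < length Xs \<Longrightarrow> x \<in> Xs!i \<Longrightarrow> x \<in> Xs!j \<Longrightarrow> i = j"
  unfolding sepd_def by blast
lemma sepdD4: "sepd A Xs \<Longrightarrow> i < length Xs \<Longrightarrow> j < length Xs \<Longrightarrow> a < c \<Longrightarrow> c < b \<Longrightarrow> b < d \<Longrightarrow>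
       a \<in> Xs!i \<Longrightarrow> b \<in> Xs!i \<Longrightarrow> c \<in> Xs!j \<Longrightarrow> d \<in> Xs!j \<Longrightarrow> i = j"
  unfolding sepd_def by blast

definition resp :: "nat set list \<Rightarrow> setpart \<Rightarrow> bool" where
  "resp Xs P \<longleftrightarrow> (\<forall>\<beta>\<in>P. \<exists>i<length Xs. \<beta> \<subseteq> Xs!i)"

definition restr :: "setpart \<Rightarrow> nat set \<Rightarrow> setpart" where
  "restr P X = {\<beta>\<in>P. \<beta> \<subseteq> X}"

lemma respD: "resp Xs P \<Longrightarrow> \<beta> \<in> P \<Longrightarrow> \<exists>i<length Xs. \<beta> \<subseteq> Xs!i"
  unfolding resp_def by blast

lemma noncrossing_subset: "noncrossing P \<Longrightarrow> Q \<subseteq> P \<Longrightarrow> noncrossing Q"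
  by (rule noncrossingI) (meson noncrossingD subsetD)

lemma finerD: "finer P Q \<Longrightarrow> b \<in> P \<Longrightarrow> \<exists>c\<in>Q. b \<subseteq> c"
  unfolding finer_def by blast

lemma block_unique_in:
  assumes G: "sepd A Xs" "i < length Xs" "j < length Xs" and "\<beta> \<subseteq> Xs!i" "\<beta> \<subseteq> Xs!j" "x \<in> \<beta>"
  shows "i = j"
  using sepdD3[OF G] assms by blast

lemma restr_part:
  assumes P: "partition_on A P" and G: "sepd A Xs" and r: "resp Xs P" and i: "i < length Xs"
  shows "partition_on (Xs!i) (restr P (Xs!i))"
proof (rule partition_onI)
  show "\<Union>(restr P (Xs!i)) = Xs!i"
  proof
    show "\<Union>(restr P (Xs!i)) \<subseteq> Xs!i" unfolding restr_def by blast
    show "Xs!i \<subseteq> \<Union>(restr P (Xs!i))"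
    proof
      fix x assume x: "x \<in> Xs!i"
      then have "x \<in> A" using sepdD1[OF G i] by blast
      then obtain \<beta> where b: "\<beta> \<in> P" "x \<in> \<beta>" using part_blockI[OF P] by blast
      obtain j where j: "j < length Xs" "\<beta> \<subseteq> Xs!j" using respD[OF r b(1)] by blast
      have "j = i" using sepdD3[OF G j(1) i] j b x by blast
      then show "x \<in> \<Union>(restr P (Xs!i))" using b j unfolding restr_def by blast
    qed
  qed
  show "\<And>p q. p \<in> restr P (Xs ! i) \<Longrightarrow> q \<in> restr P (Xs ! i) \<Longrightarrow> p \<noteq> q \<Longrightarrow> disjnt p q"
    unfolding restr_def disjnt_def using part_disj[OF P] by blast
  show "{} \<notin> restr P (Xs ! i)" using partition_onD3[OF P] unfolding restr_def by blast
qed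

lemma meet_resp:
  assumes P': "partition_on A P'" and nc: "isnc P' P" and G: "sepd A Xs" and r: "resp Xs P'"
  shows "resp Xs P"
proof -
  have A: "\<Union>P' = A" using P' partition_onD1 by blast
  have P: "partition_on A P" "noncrossing P" "finer P' P"
    using nc unfolding isnc_def A by auto
  have minl: "\<And>Q'. partition_on A Q' \<Longrightarrow> noncrossing Q' \<Longrightarrow> finer P' Q' \<Longrightarrow> finer P Q'"
    using nc unfolding isnc_def A by auto
  define R where "R = {\<beta> \<inter> Xs!i | \<beta> i. \<beta> \<in> P \<and> i < length Xs \<and> \<beta> \<inter> Xs!i \<noteq> {}}"
  have pR: "partition_on A R"
  proof (rule partition_onI)
    show "\<Union>R = A"
    proof
      show "\<Union>R \<subseteq> A" unfolding R_def using part_sub[OF P(1)] by blast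
      show "A \<subseteq> \<Union>R"
      proof
        fix x assume x: "x \<in> A"
        obtain \<beta> where b: "\<beta> \<in> P" "x \<in> \<beta>" using part_blockI[OF P(1) x] by blast
        obtain i where i: "i < length Xs" "x \<in> Xs!i" using sepdD2[OF G x] by blast
        have "\<beta> \<inter> Xs!i \<in> R" unfolding R_def using b i by blast
        then show "x \<in> \<Union>R" using b i by blast
      qed
    qed
    show "disjnt p q" if hyp: "p \<in> R" "q \<in> R" "p \<noteq> q" for p q
    proof -
      obtain \<beta>1 i1 where 1: "p = \<beta>1 \<inter> Xs!i1" "\<beta>1 \<in> P" "i1 < length Xs" using hyp(1) unfolding R_def by blast
      obtain \<beta>2 i2 where 2: "q = \<beta>2 \<inter> Xs!i2" "\<beta>2 \<in> P" "i2 < length Xs" using hyp(2) unfolding R_def by blast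
      show ?thesis unfolding disjnt_def
      proof (rule ccontr)
        assume "p \<inter> q \<noteq> {}"
        then obtain x where x: "x \<in> p" "x \<in> q" by blast
        have "\<beta>1 = \<beta>2" using part_disj[OF P(1) 1(2) 2(2)] x 1 2 by blast
        moreover have "i1 = i2" using sepdD3[OF G 1(3) 2(3)] x 1 2 by blast
        ultimately show False using hyp(3) 1 2 by simp
      qed
    qed
    show "{} \<notin> R" unfolding R_def by blast
  qed
  have ncR: "noncrossing R"
  proof (rule noncrossingI)
    fix B1 B2 a b c d
    assume B: "B1 \<in> R" "B2 \<in> R" and o: "a < c" "c < b" "b < d" and m: "a \<in> B1" "b \<in> B1" "c \<in> B2" "d \<in> B2"
    obtain \<beta>1 i1 where 1: "B1 = \<beta>1 \<inter> Xs!i1" "\<beta>1 \<in> P" "i1 < length Xs" using B(1) unfolding R_def by blast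
    obtain \<beta>2 i2 where 2: "B2 = \<beta>2 \<inter> Xs!i2" "\<beta>2 \<in> P" "i2 < length Xs" using B(2) unfolding R_def by blast
    have "\<beta>1 = \<beta>2" using noncrossingD[OF P(2) 1(2) 2(2) o] m 1 2 by blast
    moreover have "i1 = i2" using sepdD4[OF G 1(3) 2(3) o] m 1 2 by blast
    ultimately show "B1 = B2" using 1 2 by simp
  qed
  have fR: "finer P' R" unfolding finer_def
  proof
    fix b assume b: "b \<in> P'"
    obtain i where i: "i < length Xs" "b \<subseteq> Xs!i" using respD[OF r b] by blast
    obtain \<beta> where be: "\<beta> \<in> P" "b \<subseteq> \<beta>" using finerD[OF P(3) b] by blast
    obtain x where x: "x \<in> b" using part_ne[OF P' b] by blast
    have "\<beta> \<inter> Xs!i \<in> R" unfolding R_def using be i x by blast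
    then show "\<exists>c\<in>R. b \<subseteq> c" using be i by blast
  qed
  have fPR: "finer P R" using minl[OF pR ncR fR] .
  show ?thesis unfolding resp_def
  proof
    fix \<beta> assume b: "\<beta> \<in> P"
    obtain c where c: "c \<in> R" "\<beta> \<subseteq> c" using finerD[OF fPR b] by blast
    then obtain \<beta>0 i where ci: "c = \<beta>0 \<inter> Xs!i" "i < length Xs" unfolding R_def by auto
    have "\<beta> \<subseteq> Xs!i" using c(2) unfolding ci(1) by simp
    then show "\<exists>i<length Xs. \<beta> \<subseteq> Xs!i" using ci(2) by blast
  qed
qed

lemma restr_isnc:
  assumes P': "partition_on A P'" and nc: "isnc P' P" and G: "sepd A Xs" and r': "resp Xs P'"
    and r: "resp Xs P" and i: "i < length Xs"
  shows "isnc (restr P' (Xs!i)) (restr P (Xs!i))"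
proof -
  define X where "X = Xs!i"
  have A: "\<Union>P' = A" using P' partition_onD1 by blast
  have P: "partition_on A P" "noncrossing P" "finer P' P"
    using nc unfolding isnc_def A by auto
  have minl: "\<And>Q'. partition_on A Q' \<Longrightarrow> noncrossing Q' \<Longrightarrow> finer P' Q' \<Longrightarrow> finer P Q'"
    using nc unfolding isnc_def A by auto
  have UX: "\<Union>(restr P' X) = X" unfolding X_def using partition_onD1[OF restr_part[OF P' G r' i]] by (rule sym)
  have pX: "partition_on X (restr P X)" using restr_part[OF P(1) G r i] unfolding X_def .
  have ncX: "noncrossing (restr P X)" by (rule noncrossing_subset[OF P(2)]) (auto simp: restr_def)
  have fX: "finer (restr P' X) (restr P X)" unfolding finer_def
  proof
    fix b assume b: "b \<in> restr P' X"
    then have b1: "b \<in> P'" "b \<subseteq> X" unfolding restr_def by auto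
    obtain \<beta> where be: "\<beta> \<in> P" "b \<subseteq> \<beta>" using finerD[OF P(3) b1(1)] by blast
    obtain j where j: "j < length Xs" "\<beta> \<subseteq> Xs!j" using respD[OF r be(1)] by blast
    obtain x where x: "x \<in> b" using part_ne[OF P' b1(1)] by blast
    have "j = i" using sepdD3[OF G j(1) i] x be j b1 unfolding X_def by blast
    then have "\<beta> \<in> restr P X" using be j unfolding restr_def X_def by blast
    then show "\<exists>c\<in>restr P X. b \<subseteq> c" using be by blast
  qed
  have mX: "finer (restr P X) Q" if Q: "partition_on X Q" "noncrossing Q" "finer (restr P' X) Q" for Q
  proof -
    define Q2 where "Q2 = Q \<union> {\<beta>\<in>P. \<not> \<beta> \<subseteq> X}"
    have outside: "\<beta> \<inter> X = {}" if hyp: "\<beta> \<in> P" "\<not> \<beta> \<subseteq> X" for \<beta>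
    proof -
      obtain j where j: "j < length Xs" "\<beta> \<subseteq> Xs!j" using respD[OF r hyp(1)] by blast
      have ji: "j \<noteq> i" using j hyp(2) unfolding X_def by blast
      show ?thesis using sepdD3[OF G j(1) i] j(2) ji unfolding X_def by blast
    qed
    have QX: "q \<subseteq> X" if "q \<in> Q" for q using part_sub[OF Q(1) that] .
    have pQ2: "partition_on A Q2"
    proof (rule partition_onI)
      show "\<Union>Q2 = A"
      proof
        show "\<Union>Q2 \<subseteq> A" unfolding Q2_def using QX sepdD1[OF G i] part_sub[OF P(1)] unfolding X_def by blast
        show "A \<subseteq> \<Union>Q2"
        proof
          fix x assume x: "x \<in> A"
          obtain \<beta> where b: "\<beta> \<in> P" "x \<in> \<beta>" using part_blockI[OF P(1) x] by blast
          show "x \<in> \<Union>Q2"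
          proof (cases "\<beta> \<subseteq> X")
            case True
            then have "x \<in> X" using b by blast
            then show ?thesis using partition_onD1[OF Q(1)] unfolding Q2_def by blast
          next
            case False
            then show ?thesis using b unfolding Q2_def by blast
          qed
        qed
      qed
      show "disjnt p q" if hyp: "p \<in> Q2" "q \<in> Q2" "p \<noteq> q" for p q
        using hyp part_disj[OF Q(1)] part_disj[OF P(1)] outside QX
        unfolding Q2_def disjnt_def by blast
      show "{} \<notin> Q2" using partition_onD3[OF Q(1)] partition_onD3[OF P(1)] unfolding Q2_def by blast
    qed
    have ncQ2: "noncrossing Q2"
    proof (rule noncrossingI)
      fix B1 B2 a b c d
      assume B: "B1 \<in> Q2" "B2 \<in> Q2" and o: "a < c" "c < b" "b < d" and m: "a \<in> B1" "b \<in> B1" "c \<in> B2" "d \<in> B2"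
      have mixed: False if hyp: "q \<in> Q" "\<beta> \<in> P" "\<not> \<beta> \<subseteq> X" "(a \<in> q \<and> b \<in> q \<and> c \<in> \<beta> \<and> d \<in> \<beta>) \<or> (a \<in> \<beta> \<and> b \<in> \<beta> \<and> c \<in> q \<and> d \<in> q)" for q \<beta>
      proof -
        obtain j where j: "j < length Xs" "\<beta> \<subseteq> Xs!j" using respD[OF r hyp(2)] by blast
        have "j \<noteq> i" using j hyp(3) unfolding X_def by blast
        moreover have "q \<subseteq> Xs!i" using QX[OF hyp(1)] unfolding X_def .
        ultimately show False using sepdD4[OF G i j(1) o] sepdD4[OF G j(1) i o] hyp(4) j by blast
      qed
      show "B1 = B2"
      proof (cases "B1 \<in> Q")
        case True
        show ?thesis
        proof (cases "B2 \<in> Q")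
          case True
          then show ?thesis using noncrossingD[OF Q(2) \<open>B1 \<in> Q\<close> _ o m] by blast
        next
          case False
          then have "B2 \<in> P" "\<not> B2 \<subseteq> X" using B unfolding Q2_def by auto
          then show ?thesis using mixed[of B1 B2] True m by blast
        qed
      next
        case False
        then have B1P: "B1 \<in> P" "\<not> B1 \<subseteq> X" using B unfolding Q2_def by auto
        show ?thesis
        proof (cases "B2 \<in> Q")
          case True
          then show ?thesis using mixed[of B2 B1] B1P m by blast
        next
          case False
          then have "B2 \<in> P" using B unfolding Q2_def by auto
          then show ?thesis using noncrossingD[OF P(2) B1P(1) _ o m] by blast
        qed
      qed
    qed
    have fQ2: "finer P' Q2" unfolding finer_def
    proof
      fix b assume b: "b \<in> P'"
      show "\<exists>c\<in>Q2. b \<subseteq> c"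
      proof (cases "b \<subseteq> X")
        case True
        then have "b \<in> restr P' X" using b unfolding restr_def by blast
        then show ?thesis using finerD[OF Q(3)] unfolding Q2_def by blast
      next
        case False
        obtain \<beta> where be: "\<beta> \<in> P" "b \<subseteq> \<beta>" using finerD[OF P(3) b] by blast
        then have "\<not> \<beta> \<subseteq> X" using False by blast
        then show ?thesis using be unfolding Q2_def by blast
      qed
    qed
    have fPQ2: "finer P Q2" using minl[OF pQ2 ncQ2 fQ2] .
    show ?thesis unfolding finer_def
    proof
      fix \<beta> assume b: "\<beta> \<in> restr P X"
      then have b1: "\<beta> \<in> P" "\<beta> \<subseteq> X" unfolding restr_def by auto
      obtain c where c: "c \<in> Q2" "\<beta> \<subseteq> c" using finerD[OF fPQ2 b1(1)] by blast
      obtain x where x: "x \<in> \<beta>" using part_ne[OF P(1) b1(1)] by blast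
      show "\<exists>c\<in>Q. \<beta> \<subseteq> c"
      proof (cases "c \<in> Q")
        case True then show ?thesis using c by blast
      next
        case False
        then have "c \<in> P" "\<not> c \<subseteq> X" using c unfolding Q2_def by auto
        moreover have "c = \<beta>" using part_disj[OF P(1) \<open>c \<in> P\<close> b1(1)] x c by blast
        ultimately show ?thesis using b1 by blast
      qed
    qed
  qed
  have "isnc (restr P' X) (restr P X)" unfolding isnc_def UX using pX ncX fX mX by simp
  then show ?thesis unfolding X_def .
qed

lemma glue_isnc:
  assumes P': "partition_on A P'" and P: "partition_on A P" "noncrossing P" and G: "sepd A Xs"
    and r': "resp Xs P'" and r: "resp Xs P"
    and loc: "\<And>i. i < length Xs \<Longrightarrow> isnc (restr P' (Xs!i)) (restr P (Xs!i))"
  shows "isnc P' P"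
proof -
  have A: "\<Union>P' = A" using P' partition_onD1 by blast
  have UX: "\<Union>(restr P' (Xs!i)) = Xs!i" if "i < length Xs" for i
    using partition_onD1[OF restr_part[OF P' G r' that]] by (rule sym)
  have fin: "finer P' P" unfolding finer_def
  proof
    fix b assume b: "b \<in> P'"
    obtain i where i: "i < length Xs" "b \<subseteq> Xs!i" using respD[OF r' b] by blast
    have "b \<in> restr P' (Xs!i)" using b i unfolding restr_def by blast
    moreover have "finer (restr P' (Xs!i)) (restr P (Xs!i))" using loc[OF i(1)] unfolding isnc_def by blast
    ultimately obtain c where "c \<in> restr P (Xs!i)" "b \<subseteq> c" using finerD by blast
    then show "\<exists>c\<in>P. b \<subseteq> c" unfolding restr_def by blast
  qed
  have minl: "finer P Q" if Q: "partition_on A Q" "noncrossing Q" "finer P' Q" for Q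
    unfolding finer_def
  proof
    fix \<beta> assume b: "\<beta> \<in> P"
    obtain i where i: "i < length Xs" "\<beta> \<subseteq> Xs!i" using respD[OF r b] by blast
    define X where "X = Xs!i"
    define QX where "QX = (\<inter>) X ` Q - {{}}"
    have XA: "X \<inter> A = X" using sepdD1[OF G i(1)] unfolding X_def by blast
    have pQX: "partition_on X QX" using partition_on_restrict[OF Q(1), of X] unfolding XA QX_def .
    have ncQX: "noncrossing QX"
    proof (rule noncrossingI)
      fix B1 B2 a b c d
      assume B: "B1 \<in> QX" "B2 \<in> QX" and o: "a < c" "c < b" "b < d" and m: "a \<in> B1" "b \<in> B1" "c \<in> B2" "d \<in> B2"
      obtain q1 where 1: "q1 \<in> Q" "B1 = X \<inter> q1" using B(1) unfolding QX_def by blast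
      obtain q2 where 2: "q2 \<in> Q" "B2 = X \<inter> q2" using B(2) unfolding QX_def by blast
      have "q1 = q2" using noncrossingD[OF Q(2) 1(1) 2(1) o] m 1 2 by blast
      then show "B1 = B2" using 1 2 by simp
    qed
    have fQX: "finer (restr P' X) QX" unfolding finer_def
    proof
      fix b assume b: "b \<in> restr P' X"
      then have b1: "b \<in> P'" "b \<subseteq> X" unfolding restr_def by auto
      obtain q where q: "q \<in> Q" "b \<subseteq> q" using finerD[OF Q(3) b1(1)] by blast
      obtain x where x: "x \<in> b" using part_ne[OF P' b1(1)] by blast
      have "X \<inter> q \<in> QX" unfolding QX_def using q x b1 by blast
      then show "\<exists>c\<in>QX. b \<subseteq> c" using q b1 by blast
    qed
    have "finer (restr P X) QX"
      using loc[OF i(1)] pQX ncQX fQX UX[OF i(1)] unfolding isnc_def X_def by metis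
    moreover have "\<beta> \<in> restr P X" using b i unfolding restr_def X_def by blast
    ultimately obtain c where "c \<in> QX" "\<beta> \<subseteq> c" using finerD by blast
    then show "\<exists>c\<in>Q. \<beta> \<subseteq> c" unfolding QX_def by blast
  qed
  show ?thesis unfolding isnc_def A using P fin minl by blast
qed

lemma build_part:
  assumes G: "sepd A Xs" and len: "length Qs = length Xs"
    and Q: "\<And>i. i < length Xs \<Longrightarrow> partition_on (Xs!i) (Qs!i)"
  shows "partition_on A (\<Union>(set Qs))" "resp Xs (\<Union>(set Qs))"
    "\<And>i. i < length Xs \<Longrightarrow> restr (\<Union>(set Qs)) (Xs!i) = Qs!i"
proof -
  have U: "\<Union>(set Qs) = (\<Union>j<length Xs. Qs!j)" using len by (auto simp: set_conv_nth)
  have sub: "p \<subseteq> Xs!j" if "j < length Xs" "p \<in> Qs!j" for p j using part_sub[OF Q[OF that(1)] that(2)] .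
  have ne: "p \<noteq> {}" if "j < length Xs" "p \<in> Qs!j" for p j using partition_onD3[OF Q[OF that(1)]] that(2) by blast
  show "partition_on A (\<Union>(set Qs))"
  proof (rule partition_onI)
    show "\<Union>(\<Union>(set Qs)) = A"
    proof
      show "\<Union>(\<Union>(set Qs)) \<subseteq> A" unfolding U using sub sepdD1[OF G] by blast
      show "A \<subseteq> \<Union>(\<Union>(set Qs))"
      proof
        fix x assume "x \<in> A"
        then obtain j where j: "j < length Xs" "x \<in> Xs!j" using sepdD2[OF G] by blast
        then have "x \<in> \<Union>(Qs!j)" using partition_onD1[OF Q[OF j(1)]] by blast
        then show "x \<in> \<Union>(\<Union>(set Qs))" unfolding U using j by blast
      qed
    qed
    show "disjnt p q" if hyp: "p \<in> \<Union>(set Qs)" "q \<in> \<Union>(set Qs)" "p \<noteq> q" for p q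
    proof -
      obtain j where j: "j < length Xs" "p \<in> Qs!j" using hyp(1) unfolding U by blast
      obtain k where k: "k < length Xs" "q \<in> Qs!k" using hyp(2) unfolding U by blast
      show ?thesis
      proof (cases "j = k")
        case True
        then show ?thesis using part_disj[OF Q[OF j(1)]] j k hyp(3) unfolding disjnt_def by blast
      next
        case False
        then show ?thesis using sepdD3[OF G j(1) k(1)] sub[OF j] sub[OF k] unfolding disjnt_def by blast
      qed
    qed
    show "{} \<notin> \<Union>(set Qs)" unfolding U using ne by blast
  qed
  show "resp Xs (\<Union>(set Qs))" unfolding resp_def U using sub by blast
  show "restr (\<Union>(set Qs)) (Xs!i) = Qs!i" if i: "i < length Xs" for i
  proof
    show "restr (\<Union>(set Qs)) (Xs!i) \<subseteq> Qs!i"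
    proof
      fix p assume "p \<in> restr (\<Union>(set Qs)) (Xs!i)"
      then obtain j where j: "j < length Xs" "p \<in> Qs!j" "p \<subseteq> Xs!i" unfolding restr_def U by blast
      obtain x where "x \<in> p" using ne[OF j(1,2)] by blast
      then have "j = i" using sepdD3[OF G j(1) i] sub[OF j(1,2)] j(3) by blast
      then show "p \<in> Qs!i" using j by simp
    qed
    show "Qs!i \<subseteq> restr (\<Union>(set Qs)) (Xs!i)" unfolding restr_def U using sub[OF i] i by blast
  qed
qed

lemma resp_decomp:
  assumes "resp Xs P"
  shows "P = (\<Union>i<length Xs. restr P (Xs!i))"
  using assms unfolding resp_def restr_def by blast

definition gapD :: "nat \<Rightarrow> nat set \<Rightarrow> nat \<Rightarrow> nat set" where
  "gapD n S i = {y \<in> {1..n}. (i = 0 \<or> sorted_list_of_set S ! (i - 1) < y) \<and>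
      (i = length (sorted_list_of_set S) \<or> y < sorted_list_of_set S ! i)}"

lemma gaps_eq: "gaps n S = map (gapD n S) [0..<length (sorted_list_of_set S) + 1]"
  unfolding gaps_def gapD_def Let_def by simp

lemma gaps_len: "length (gaps n S) = length (sorted_list_of_set S) + 1"
  unfolding gaps_eq by simp

lemma gaps_nth: "i < length (gaps n S) \<Longrightarrow> gaps n S ! i = gapD n S i"
  unfolding gaps_eq by (simp del: upt_Suc)

context
  fixes S :: "nat set" and n :: nat
  assumes Sn: "S \<subseteq> {1..n}"
begin

private abbreviation "xs \<equiv> sorted_list_of_set S"
private abbreviation "k \<equiv> length (sorted_list_of_set S)"

lemma finS: "finite S" using Sn finite_subset by blast

lemma xs_set: "set xs = S" using finS by simp

lemma xs_mono: "i < j \<Longrightarrow> j < k \<Longrightarrow> xs!i < xs!j"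
  using sorted_wrt_nth_less[OF strict_sorted_list_of_set] by blast

lemma xs_mono_le: "i \<le> j \<Longrightarrow> j < k \<Longrightarrow> xs!i \<le> xs!j"
  using xs_mono by (cases "i = j") (auto intro: less_imp_le)

lemma xs_in: "i < k \<Longrightarrow> xs!i \<in> S"
  using xs_set nth_mem by blast

lemma xs_ex: "s \<in> S \<Longrightarrow> \<exists>j<k. xs!j = s"
  using xs_set by (metis in_set_conv_nth)

lemma gD1: "i \<le> k \<Longrightarrow> y \<in> gapD n S i \<Longrightarrow> y \<notin> S"
proof
  assume i: "i \<le> k" and y: "y \<in> gapD n S i" and yS: "y \<in> S"
  obtain j where j: "j < k" "xs!j = y" using xs_ex[OF yS] by blast
  show False
  proof (cases "j < i")
    case True
    then have "xs!j \<le> xs!(i-1)" using xs_mono_le[of j "i-1"] i by auto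
    moreover have "xs!(i-1) < y" using y True unfolding gapD_def by auto
    ultimately show False using j by simp
  next
    case False
    then have "i < k" using j by simp
    then have "y < xs!i" using y unfolding gapD_def by auto
    moreover have "xs!i \<le> xs!j" using xs_mono_le[of i j] False j by simp
    ultimately show False using j by simp
  qed
qed

lemma gD2: "i < j \<Longrightarrow> j \<le> k \<Longrightarrow> gapD n S i \<inter> gapD n S j = {}"
proof (rule ccontr)
  assume ij: "i < j" "j \<le> k" and "gapD n S i \<inter> gapD n S j \<noteq> {}"
  then obtain y where y: "y \<in> gapD n S i" "y \<in> gapD n S j" by blast
  have "y < xs!i" using y(1) ij unfolding gapD_def by auto
  moreover have "xs!(j-1) < y" using y(2) ij unfolding gapD_def by auto
  moreover have "xs!i \<le> xs!(j-1)" using xs_mono_le[of i "j-1"] ij by auto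
  ultimately show False by simp
qed

lemma gD3: "y \<in> {1..n} \<Longrightarrow> y \<notin> S \<Longrightarrow> \<exists>i\<le>k. y \<in> gapD n S i"
proof -
  assume y: "y \<in> {1..n}" "y \<notin> S"
  define i where "i = (LEAST i. i = k \<or> y < xs!i)"
  have ex: "i = k \<or> y < xs!i" unfolding i_def by (rule LeastI[of _ k]) simp
  have ik: "i \<le> k" unfolding i_def by (rule Least_le) simp
  have lo: "i = 0 \<or> xs!(i-1) < y"
  proof (cases "i = 0")
    case False
    have "i - 1 < (LEAST i. i = k \<or> y < xs!i)" using False unfolding i_def[symmetric] by simp
    then have "\<not> (i - 1 = k \<or> y < xs!(i-1))"
      by (rule not_less_Least)
    then have "xs!(i-1) \<le> y" "i - 1 < k" using ik False by auto
    moreover have "xs!(i-1) \<noteq> y" using xs_in[of "i-1"] y(2) \<open>i - 1 < k\<close> by auto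
    ultimately show ?thesis by simp
  qed simp
  have "y \<in> gapD n S i" unfolding gapD_def using y(1) ex lo by auto
  then show ?thesis using ik by blast
qed

lemma gD4: "a \<in> gapD n S i \<Longrightarrow> b \<in> gapD n S i \<Longrightarrow> a \<le> c \<Longrightarrow> c \<le> b \<Longrightarrow> c \<in> gapD n S i"
  unfolding gapD_def by auto

lemma gD5:
  assumes x: "x \<in> gapD n S i" and i: "i \<le> k" and y: "y \<in> {1..n}"
    and nb: "\<And>s. s \<in> S \<Longrightarrow> \<not> (min x y \<le> s \<and> s \<le> max x y)"
  shows "y \<in> gapD n S i"
proof -
  have lo: "i = 0 \<or> xs!(i-1) < y"
  proof (cases "i = 0")
    case False
    then have "xs!(i-1) < x" using x unfolding gapD_def by auto
    moreover have "xs!(i-1) \<in> S" using xs_in[of "i-1"] i False by auto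
    ultimately show ?thesis using nb[of "xs!(i-1)"] by (cases "xs!(i-1) < y") auto
  qed simp
  have hi: "i = k \<or> y < xs!i"
  proof (cases "i = k")
    case False
    then have "x < xs!i" using x unfolding gapD_def by auto
    moreover have "xs!i \<in> S" using xs_in[of i] i False by auto
    ultimately show ?thesis using nb[of "xs!i"] by (cases "y < xs!i") auto
  qed simp
  show ?thesis unfolding gapD_def using y lo hi by auto
qed

lemma gapD_sub: "gapD n S i \<subseteq> {1..n}" unfolding gapD_def by auto

lemma sepd_gaps: "sepd {1..n} (S # gaps n S)"
proof -
  let ?X = "S # gaps n S"
  have len: "length ?X = k + 2" using gaps_len by simp
  have nth0: "?X ! 0 = S" by simp
  have nthS: "j \<le> k \<Longrightarrow> ?X ! Suc j = gapD n S j" for j using gaps_nth[of j n S] gaps_len by simp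
  have idx: "p < length ?X \<Longrightarrow> p = 0 \<or> (\<exists>j\<le>k. p = Suc j)" for p using len by (cases p) auto
  show ?thesis unfolding sepd_def
  proof (intro conjI allI impI ballI)
    fix i assume "i < length ?X"
    then consider "i = 0" | j where "j \<le> k" "i = Suc j" using idx by blast
    then show "?X ! i \<subseteq> {1..n}"
    proof cases
      case 1 then show ?thesis using Sn by simp
    next
      case 2 then show ?thesis using nthS[of j] gapD_sub[of j] by simp
    qed
  next
    fix x assume x: "x \<in> {1..n}"
    show "\<exists>i<length ?X. x \<in> ?X ! i"
    proof (cases "x \<in> S")
      case True then show ?thesis using nth0 len by (intro exI[of _ 0]) auto
    next
      case False
      then obtain j where "j \<le> k" "x \<in> gapD n S j" using gD3 x by blast
      then show ?thesis using nthS len by (intro exI[of _ "Suc j"]) auto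
    qed
  next
    fix i j assume ij: "i < length ?X" "j < length ?X" "i \<noteq> j"
    show "?X ! i \<inter> ?X ! j = {}"
      using idx[OF ij(1)] idx[OF ij(2)] ij(3)
    proof (elim disjE exE conjE)
      fix j' assume "i = 0" "j' \<le> k" "j = Suc j'"
      then show ?thesis using gD1 nthS by auto
    next
      fix i' assume "i' \<le> k" "i = Suc i'" "j = 0"
      then show ?thesis using gD1 nthS by auto
    next
      fix i' j' assume a: "i' \<le> k" "i = Suc i'" "j' \<le> k" "j = Suc j'"
      then have "i' < j' \<or> j' < i'" using ij(3) by auto
      then show ?thesis using gD2 a nthS by (auto simp: Int_commute)
    qed simp
  next
    fix i j a b c d
    assume ij: "i < length ?X" "j < length ?X" and o: "a < c" "c < b" "b < d"
      and m: "a \<in> ?X ! i" "b \<in> ?X ! i" "c \<in> ?X ! j" "d \<in> ?X ! j"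
    show "i = j"
      using idx[OF ij(1)] idx[OF ij(2)]
    proof (elim disjE exE conjE)
      fix j' assume a: "i = 0" "j' \<le> k" "j = Suc j'"
      then have "b \<in> gapD n S j'" using gD4[of c j' d b] m o nthS by auto
      then show ?thesis using gD1 a m by auto
    next
      fix i' assume a: "i' \<le> k" "i = Suc i'" "j = 0"
      then have "c \<in> gapD n S i'" using gD4[of a i' b c] m o nthS by auto
      then show ?thesis using gD1 a m by auto
    next
      fix i' j' assume a: "i' \<le> k" "i = Suc i'" "j' \<le> k" "j = Suc j'"
      then have "c \<in> gapD n S i'" using gD4[of a i' b c] m o nthS by auto
      moreover have "c \<in> gapD n S j'" using m a nthS by auto
      ultimately have "\<not> (i' < j' \<or> j' < i')" using gD2 a by blast
      then show ?thesis using a by simp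
    qed simp
  qed
qed

lemma conv_mem: "finite \<beta> \<Longrightarrow> x \<in> \<beta> \<Longrightarrow> x \<in> conv \<beta>"
  unfolding conv_def by auto

lemma resp_block_char:
  assumes b: "\<beta> \<subseteq> {1..n}" "\<beta> \<noteq> {}"
  shows "(\<exists>i<length (S # gaps n S). \<beta> \<subseteq> (S # gaps n S) ! i) \<longleftrightarrow> \<beta> \<subseteq> S \<or> conv \<beta> \<inter> S = {}"
proof -
  let ?X = "S # gaps n S"
  have len: "length ?X = k + 2" using gaps_len by simp
  have nthS: "j \<le> k \<Longrightarrow> ?X ! Suc j = gapD n S j" for j using gaps_nth[of j n S] gaps_len by simp
  have fb: "finite \<beta>" using b finite_subset by blast
  show ?thesis
  proof
    assume "\<exists>i<length ?X. \<beta> \<subseteq> ?X ! i"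
    then obtain i where i: "i < length ?X" "\<beta> \<subseteq> ?X ! i" by blast
    show "\<beta> \<subseteq> S \<or> conv \<beta> \<inter> S = {}"
    proof (cases i)
      case 0 then show ?thesis using i by simp
    next
      case (Suc j)
      then have j: "j \<le> k" "\<beta> \<subseteq> gapD n S j" using i len nthS by auto
      have "Min \<beta> \<in> \<beta>" "Max \<beta> \<in> \<beta>" using fb b by auto
      then have mm: "Min \<beta> \<in> gapD n S j" "Max \<beta> \<in> gapD n S j" using j by auto
      have "conv \<beta> \<subseteq> gapD n S j" unfolding conv_def
      proof
        fix c assume "c \<in> {Min \<beta>..Max \<beta>}"
        then show "c \<in> gapD n S j" using gD4[OF mm] by simp
      qed
      then show ?thesis using gD1[OF j(1)] by blast
    qed
  next
    assume "\<beta> \<subseteq> S \<or> conv \<beta> \<inter> S = {}"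
    then show "\<exists>i<length ?X. \<beta> \<subseteq> ?X ! i"
    proof
      assume "\<beta> \<subseteq> S" then show ?thesis by (intro exI[of _ 0]) simp
    next
      assume cv: "conv \<beta> \<inter> S = {}"
      obtain x where x: "x \<in> \<beta>" using b by blast
      have "x \<notin> S" using cv conv_mem[OF fb x] by blast
      then obtain j where j: "j \<le> k" "x \<in> gapD n S j" using gD3 x b by blast
      have "\<beta> \<subseteq> gapD n S j"
      proof
        fix y assume y: "y \<in> \<beta>"
        show "y \<in> gapD n S j"
        proof (rule gD5[OF j(2) j(1)])
          show "y \<in> {1..n}" using y b by blast
          fix s assume s: "s \<in> S"
          show "\<not> (min x y \<le> s \<and> s \<le> max x y)"
          proof
            assume "min x y \<le> s \<and> s \<le> max x y"
            moreover have "Min \<beta> \<le> min x y" "max x y \<le> Max \<beta>" using x y fb by auto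
            ultimately have "s \<in> conv \<beta>" unfolding conv_def by auto
            then show False using cv s by blast
          qed
        qed
      qed
      then show ?thesis using j len nthS by (intro exI[of _ "Suc j"]) auto
    qed
  qed
qed

end

lemma arrowI: "\<pi> \<in> P \<Longrightarrow> \<rho> \<in> P \<Longrightarrow> y \<in> conv \<pi> \<Longrightarrow> y \<in> \<rho> \<Longrightarrow> (\<pi>, \<rho>) \<in> arrow P"
  unfolding arrow_def by blast

lemma arrowD: "(\<pi>, \<rho>) \<in> arrow P \<Longrightarrow> \<pi> \<in> P \<and> \<rho> \<in> P \<and> conv \<pi> \<inter> \<rho> \<noteq> {}"
  unfolding arrow_def by blast

lemma arrow_trancl_range: "(\<pi>, \<rho>) \<in> (arrow P)\<^sup>+ \<Longrightarrow> \<rho> \<in> P"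
  by (induction rule: trancl_induct) (auto dest: arrowD)

lemma part_fin_block: "partition_on {1..n} P \<Longrightarrow> \<beta> \<in> P \<Longrightarrow> \<beta> \<subseteq> {1..n} \<and> \<beta> \<noteq> {}"
  using part_sub partition_onD3 by fastforce

lemma cuts_char:
  assumes P: "partition_on {1..n} P"
  shows "L \<in> cuts P \<longleftrightarrow> L \<subseteq> P \<and> resp (\<Union>L # gaps n (\<Union>L)) P"
proof
  assume "L \<in> cuts P"
  then have lo: "lowerset P L" and up: "upperset P (P - L)" unfolding cuts_def by auto
  have LP: "L \<subseteq> P" using lo unfolding lowerset_def by blast
  have Sn: "\<Union>L \<subseteq> {1..n}" using LP part_sub[OF P] by blast
  have "resp (\<Union>L # gaps n (\<Union>L)) P" unfolding resp_def
  proof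
    fix \<beta> assume b: "\<beta> \<in> P"
    have bb: "\<beta> \<subseteq> {1..n}" "\<beta> \<noteq> {}" using part_fin_block[OF P b] by auto
    have "\<beta> \<subseteq> \<Union>L \<or> conv \<beta> \<inter> \<Union>L = {}"
    proof (cases "\<beta> \<in> L")
      case True then show ?thesis by blast
    next
      case False
      have "conv \<beta> \<inter> \<Union>L = {}"
      proof (rule ccontr)
        assume "conv \<beta> \<inter> \<Union>L \<noteq> {}"
        then obtain y \<pi> where y: "y \<in> conv \<beta>" "\<pi> \<in> L" "y \<in> \<pi>" by blast
        have "(\<beta>, \<pi>) \<in> arrow P" using arrowI[OF b _ y(1) y(3)] y(2) LP by blast
        then have "(\<beta>, \<pi>) \<in> (arrow P)\<^sup>+" by blast
        moreover have "\<beta> \<in> P - L" using b False by blast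
        ultimately have "\<pi> \<in> P - L" using up unfolding upperset_def by blast
        then show False using y(2) by blast
      qed
      then show ?thesis by blast
    qed
    then show "\<exists>i<length (\<Union>L # gaps n (\<Union>L)). \<beta> \<subseteq> (\<Union>L # gaps n (\<Union>L)) ! i"
      using resp_block_char[OF Sn bb] by blast
  qed
  then show "L \<subseteq> P \<and> resp (\<Union>L # gaps n (\<Union>L)) P" using LP by blast
next
  assume a: "L \<subseteq> P \<and> resp (\<Union>L # gaps n (\<Union>L)) P"
  then have LP: "L \<subseteq> P" and r: "resp (\<Union>L # gaps n (\<Union>L)) P" by auto
  have Sn: "\<Union>L \<subseteq> {1..n}" using LP part_sub[OF P] by blast
  have onestep: "\<sigma> \<in> L" if st: "(\<sigma>, \<pi>) \<in> arrow P" "\<pi> \<in> L" for \<sigma> \<pi>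
  proof (rule ccontr)
    assume nL: "\<sigma> \<notin> L"
    have sP: "\<sigma> \<in> P" and cv: "conv \<sigma> \<inter> \<pi> \<noteq> {}" using arrowD[OF st(1)] by auto
    have bb: "\<sigma> \<subseteq> {1..n}" "\<sigma> \<noteq> {}" using part_fin_block[OF P sP] by auto
    have "\<sigma> \<subseteq> \<Union>L \<or> conv \<sigma> \<inter> \<Union>L = {}"
      using resp_block_char[OF Sn bb] respD[OF r sP] by blast
    then show False
    proof
      assume "\<sigma> \<subseteq> \<Union>L"
      then obtain x \<pi>' where x: "x \<in> \<sigma>" "\<pi>' \<in> L" "x \<in> \<pi>'" using bb by blast
      then have "\<sigma> = \<pi>'" using part_disj[OF P sP] LP by blast
      then show False using nL x by blast
    next
      assume "conv \<sigma> \<inter> \<Union>L = {}"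
      then show False using cv st(2) by blast
    qed
  qed
  have lo: "lowerset P L" unfolding lowerset_def
  proof (intro conjI ballI allI impI)
    show "L \<subseteq> P" by (rule LP)
    fix \<pi> \<sigma> assume pi: "\<pi> \<in> L" and tr: "(\<sigma>, \<pi>) \<in> (arrow P)\<^sup>+"
    show "\<sigma> \<in> L" using tr pi
    proof (induction rule: converse_trancl_induct)
      case (base y) then show ?case using onestep by blast
    next
      case (step y z) then show ?case using onestep by blast
    qed
  qed
  have up: "upperset P (P - L)" unfolding upperset_def
  proof (intro conjI ballI allI impI)
    show "P - L \<subseteq> P" by blast
    fix \<pi> \<rho> assume pi: "\<pi> \<in> P - L" and tr: "(\<pi>, \<rho>) \<in> (arrow P)\<^sup>+"
    have "\<rho> \<in> P" using arrow_trancl_range[OF tr] .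
    moreover have "\<rho> \<notin> L" using lo pi tr unfolding lowerset_def by blast
    ultimately show "\<rho> \<in> P - L" by blast
  qed
  show "L \<in> cuts P" unfolding cuts_def using lo up by blast
qed

lemma cut_restr:
  assumes P: "partition_on {1..n} P" and L: "L \<in> cuts P"
  shows "L = restr P (\<Union>L)"
proof -
  have LP: "L \<subseteq> P" using L cuts_char[OF P] by blast
  show ?thesis unfolding restr_def
  proof
    show "L \<subseteq> {\<beta> \<in> P. \<beta> \<subseteq> \<Union> L}" using LP by blast
    show "{\<beta> \<in> P. \<beta> \<subseteq> \<Union> L} \<subseteq> L"
    proof
      fix \<beta> assume b: "\<beta> \<in> {\<beta> \<in> P. \<beta> \<subseteq> \<Union> L}"
      then have bP: "\<beta> \<in> P" "\<beta> \<subseteq> \<Union>L" by auto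
      obtain x where x: "x \<in> \<beta>" using part_ne[OF P bP(1)] by blast
      then obtain \<pi> where "\<pi> \<in> L" "x \<in> \<pi>" using bP by blast
      moreover then have "\<beta> = \<pi>" using part_disj[OF P bP(1)] LP x by blast
      ultimately show "\<beta> \<in> L" by simp
    qed
  qed
qed

lemma restr_cut:
  assumes P: "partition_on {1..n} P" and Sn: "S \<subseteq> {1..n}" and r: "resp (S # gaps n S) P"
  shows "restr P S \<in> cuts P" "\<Union>(restr P S) = S"
proof -
  have "partition_on ((S # gaps n S) ! 0) (restr P ((S # gaps n S) ! 0))"
    by (rule restr_part[OF P sepd_gaps[OF Sn] r]) simp
  then show U: "\<Union>(restr P S) = S" using partition_onD1 by fastforce
  show "restr P S \<in> cuts P" unfolding cuts_char[OF P] U using r unfolding restr_def by blast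
qed

definition imgs :: "(nat \<Rightarrow> nat) \<Rightarrow> setpart \<Rightarrow> setpart" where
  "imgs f Q = (`) f ` Q"

lemma std_imgs: "std Q = imgs (rank_in (\<Union>Q)) Q"
  unfolding std_def imgs_def ..

lemma rank_strict_mono:
  assumes X: "finite X" shows "strict_mono_on X (rank_in X)"
proof (rule strict_mono_onI)
  fix r s assume rs: "r \<in> X" "s \<in> X" "r < s"
  have sub: "{y \<in> X. y \<le> r} \<subseteq> {y \<in> X. y \<le> s}" using rs by auto
  have "s \<in> {y \<in> X. y \<le> s}" "s \<notin> {y \<in> X. y \<le> r}" using rs by auto
  then have "{y \<in> X. y \<le> r} \<subset> {y \<in> X. y \<le> s}" using sub by blast
  then show "rank_in X r < rank_in X s" unfolding rank_in_def
    by (rule psubset_card_mono[rotated]) (use X in simp)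
qed

lemma rank_image:
  assumes X: "finite X" shows "rank_in X ` X = {1..card X}"
proof -
  have inj: "inj_on (rank_in X) X" using strict_mono_on_imp_inj_on[OF rank_strict_mono[OF X]] .
  have sub: "rank_in X ` X \<subseteq> {1..card X}"
  proof
    fix y assume "y \<in> rank_in X ` X"
    then obtain x where x: "x \<in> X" "y = rank_in X x" by blast
    have "{z \<in> X. z \<le> x} \<noteq> {}" using x by blast
    then have "1 \<le> card {z \<in> X. z \<le> x}" using X by (simp add: Suc_leI card_gt_0_iff)
    moreover have "card {z \<in> X. z \<le> x} \<le> card X" using X by (intro card_mono) auto
    ultimately show "y \<in> {1..card X}" using x unfolding rank_in_def by simp
  qed
  have "card (rank_in X ` X) = card {1..card X}" using card_image[OF inj] by simp
  then show ?thesis using card_subset_eq[OF _ sub] by simp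
qed

lemma imgs_part:
  assumes "partition_on A Q" "inj_on f A"
  shows "partition_on (f ` A) (imgs f Q)"
proof -
  have "imgs f Q - {{}} = imgs f Q" using partition_onD3[OF assms(1)] unfolding imgs_def by auto
  then show ?thesis using partition_on_inj_image[OF assms] unfolding imgs_def by simp
qed

lemma imgs_nc:
  assumes nc: "noncrossing Q" and f: "strict_mono_on (\<Union>Q) f"
  shows "noncrossing (imgs f Q)"
proof (rule noncrossingI)
  fix B1 B2 a b c d
  assume B: "B1 \<in> imgs f Q" "B2 \<in> imgs f Q" and o: "a < c" "c < b" "b < d" and m: "a \<in> B1" "b \<in> B1" "c \<in> B2" "d \<in> B2"
  obtain b1 where b1: "b1 \<in> Q" "B1 = f ` b1" using B(1) unfolding imgs_def by blast
  obtain b2 where b2: "b2 \<in> Q" "B2 = f ` b2" using B(2) unfolding imgs_def by blast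
  obtain a' where a': "a' \<in> b1" "a = f a'" using m b1 by blast
  obtain b' where b': "b' \<in> b1" "b = f b'" using m b1 by blast
  obtain c' where c': "c' \<in> b2" "c = f c'" using m b2 by blast
  obtain d' where d': "d' \<in> b2" "d = f d'" using m b2 by blast
  have U: "a' \<in> \<Union>Q" "b' \<in> \<Union>Q" "c' \<in> \<Union>Q" "d' \<in> \<Union>Q" using a' b' c' d' b1 b2 by auto
  have o1: "a' < c'" using strict_mono_on_less[OF f U(1) U(3)] o(1) a'(2) c'(2) by simp
  have o2: "c' < b'" using strict_mono_on_less[OF f U(3) U(2)] o(2) b'(2) c'(2) by simp
  have o3: "b' < d'" using strict_mono_on_less[OF f U(2) U(4)] o(3) b'(2) d'(2) by simp
  have "b1 = b2" by (rule noncrossingD[OF nc b1(1) b2(1) o1 o2 o3 a'(1) b'(1) c'(1) d'(1)])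
  then show "B1 = B2" using b1 b2 by simp
qed

lemma imgs_finer: "finer P Q \<Longrightarrow> finer (imgs f P) (imgs f Q)"
  unfolding finer_def
proof
  assume h: "\<forall>b\<in>P. \<exists>c\<in>Q. b \<subseteq> c"
  fix b' assume "b' \<in> imgs f P"
  then obtain b where b: "b \<in> P" "b' = f ` b" unfolding imgs_def by blast
  obtain c where c: "c \<in> Q" "b \<subseteq> c" using h b(1) by blast
  have "f ` c \<in> imgs f Q" using c(1) unfolding imgs_def by blast
  moreover have "b' \<subseteq> f ` c" using b(2) c(2) by blast
  ultimately show "\<exists>c\<in>imgs f Q. b' \<subseteq> c" by blast
qed

lemma imgs_comp: "(\<And>x. x \<in> \<Union>Q \<Longrightarrow> g (f x) = x) \<Longrightarrow> imgs g (imgs f Q) = Q"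
proof -
  assume h: "\<And>x. x \<in> \<Union>Q \<Longrightarrow> g (f x) = x"
  have "(`) g ` (`) f ` Q = (\<lambda>b. (g \<circ> f) ` b) ` Q" by (simp add: image_comp)
  also have "\<dots> = (\<lambda>b. b) ` Q"
  proof (rule image_cong[OF refl])
    fix b assume "b \<in> Q"
    then show "(g \<circ> f) ` b = b" using h by force
  qed
  finally show ?thesis unfolding imgs_def by simp
qed

lemma imgs_Union: "\<Union>(imgs f Q) = f ` \<Union>Q"
  unfolding imgs_def by blast

lemma inv_strict_mono:
  fixes f :: "nat \<Rightarrow> nat"
  assumes f: "strict_mono_on A f"
  shows "strict_mono_on (f ` A) (the_inv_into A f)"
proof (rule strict_mono_onI)
  have inj: "inj_on f A" using strict_mono_on_imp_inj_on[OF f] .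
  fix r s assume rs: "r \<in> f ` A" "s \<in> f ` A" "r < s"
  obtain x where x: "x \<in> A" "r = f x" using rs by blast
  obtain y where y: "y \<in> A" "s = f y" using rs by blast
  have "x < y" using strict_mono_on_less[OF f x(1) y(1)] rs x y by simp
  then show "the_inv_into A f r < the_inv_into A f s" using the_inv_into_f_f[OF inj] x y by simp
qed

lemma isnc_transport:
  fixes f :: "nat \<Rightarrow> nat"
  assumes nc: "isnc P Q" and P: "partition_on A P" and f: "strict_mono_on A f"
  shows "isnc (imgs f P) (imgs f Q)"
proof -
  have A: "\<Union>P = A" using partition_onD1[OF P] by simp
  have Q: "partition_on A Q" "noncrossing Q" "finer P Q" using nc unfolding isnc_def A by auto
  have minl: "\<And>Q'. partition_on A Q' \<Longrightarrow> noncrossing Q' \<Longrightarrow> finer P Q' \<Longrightarrow> finer Q Q'"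
    using nc unfolding isnc_def A by blast
  have inj: "inj_on f A" using strict_mono_on_imp_inj_on[OF f] .
  define g where "g = the_inv_into A f"
  have g: "strict_mono_on (f ` A) g" unfolding g_def by (rule inv_strict_mono[OF f])
  have ginj: "inj_on g (f ` A)" using strict_mono_on_imp_inj_on[OF g] .
  have gf: "\<And>x. x \<in> A \<Longrightarrow> g (f x) = x" unfolding g_def using the_inv_into_f_f[OF inj] by blast
  have fg: "\<And>y. y \<in> f ` A \<Longrightarrow> f (g y) = y" unfolding g_def using f_the_inv_into_f[OF inj] by blast
  have gfA: "g ` f ` A = A" unfolding g_def using the_inv_into_onto[OF inj] .
  have UA: "\<Union>(imgs f P) = f ` A" unfolding imgs_Union A ..
  have UQ: "\<Union>Q = A" using partition_onD1[OF Q(1)] by simp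
  have p1: "partition_on (f ` A) (imgs f Q)" by (rule imgs_part[OF Q(1) inj])
  have p2: "noncrossing (imgs f Q)" by (rule imgs_nc[OF Q(2)]) (simp add: UQ f)
  have p3: "finer (imgs f P) (imgs f Q)" by (rule imgs_finer[OF Q(3)])
  have p4: "finer (imgs f Q) Q'" if Q': "partition_on (f ` A) Q'" "noncrossing Q'" "finer (imgs f P) Q'" for Q'
  proof -
    have UQ': "\<Union>Q' = f ` A" using partition_onD1[OF Q'(1)] by simp
    have a: "partition_on A (imgs g Q')" using imgs_part[OF Q'(1) ginj] gfA by simp
    have b: "noncrossing (imgs g Q')" by (rule imgs_nc[OF Q'(2)]) (simp add: UQ' g)
    have "finer (imgs g (imgs f P)) (imgs g Q')" by (rule imgs_finer[OF Q'(3)])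
    moreover have "imgs g (imgs f P) = P" by (rule imgs_comp) (use gf A in blast)
    ultimately have c: "finer P (imgs g Q')" by simp
    have "finer Q (imgs g Q')" using minl[OF a b c] .
    then have "finer (imgs f Q) (imgs f (imgs g Q'))" by (rule imgs_finer)
    moreover have "imgs f (imgs g Q') = Q'" by (rule imgs_comp) (use fg UQ' in blast)
    ultimately show ?thesis by simp
  qed
  show ?thesis unfolding isnc_def UA using p1 p2 p3 p4 by blast
qed

context
  fixes X :: "nat set"
  assumes finX: "finite X"
begin

lemma std_eq: "partition_on X Q \<Longrightarrow> std Q = imgs (rank_in X) Q"
  using std_imgs partition_onD1 by metis

lemma std_part: "partition_on X Q \<Longrightarrow> partition_on {1..card X} (std Q)"
  using imgs_part[of X Q "rank_in X"] std_eq rank_image[OF finX]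
    strict_mono_on_imp_inj_on[OF rank_strict_mono[OF finX]] by simp

lemma std_degree: "partition_on X Q \<Longrightarrow> degree (std Q) = card X"
  using partition_onD1[OF std_part] unfolding degree_def by (metis card_atLeastAtMost diff_Suc_1)

lemma rank_inv:
  shows "strict_mono_on {1..card X} (the_inv_into X (rank_in X))"
    "\<And>x. x \<in> X \<Longrightarrow> the_inv_into X (rank_in X) (rank_in X x) = x"
    "\<And>y. y \<in> {1..card X} \<Longrightarrow> rank_in X (the_inv_into X (rank_in X) y) = y"
    "inj_on (the_inv_into X (rank_in X)) {1..card X}"
    "the_inv_into X (rank_in X) ` {1..card X} = X"
proof -
  have f: "strict_mono_on X (rank_in X)" by (rule rank_strict_mono[OF finX])
  have inj: "inj_on (rank_in X) X" using strict_mono_on_imp_inj_on[OF f] .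
  have im: "rank_in X ` X = {1..card X}" by (rule rank_image[OF finX])
  show "strict_mono_on {1..card X} (the_inv_into X (rank_in X))" using inv_strict_mono[OF f] im by simp
  show "\<And>x. x \<in> X \<Longrightarrow> the_inv_into X (rank_in X) (rank_in X x) = x" using the_inv_into_f_f[OF inj] by blast
  show "\<And>y. y \<in> {1..card X} \<Longrightarrow> rank_in X (the_inv_into X (rank_in X) y) = y"
    using f_the_inv_into_f[OF inj] im by blast
  show "inj_on (the_inv_into X (rank_in X)) {1..card X}" using inj_on_the_inv_into[OF inj] im by simp
  show "the_inv_into X (rank_in X) ` {1..card X} = X" using the_inv_into_onto[OF inj] im by simp
qed

lemma g_rank: "partition_on X Q \<Longrightarrow> imgs (the_inv_into X (rank_in X)) (imgs (rank_in X) Q) = Q"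
proof (rule imgs_comp)
  fix x assume Q: "partition_on X Q" and "x \<in> \<Union>Q"
  have U: "\<Union>Q = X" by (rule sym[OF partition_onD1[OF Q]])
  then have "x \<in> X" using \<open>x \<in> \<Union>Q\<close> by simp
  then show "the_inv_into X (rank_in X) (rank_in X x) = x" by (rule rank_inv(2))
qed

lemma rank_g: "partition_on {1..card X} B \<Longrightarrow> imgs (rank_in X) (imgs (the_inv_into X (rank_in X)) B) = B"
proof (rule imgs_comp)
  fix x assume Q: "partition_on {1..card X} B" and "x \<in> \<Union>B"
  have U: "\<Union>B = {1..card X}" by (rule sym[OF partition_onD1[OF Q]])
  then have "x \<in> {1..card X}" using \<open>x \<in> \<Union>B\<close> by simp
  then show "rank_in X (the_inv_into X (rank_in X) x) = x" by (rule rank_inv(3))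
qed

lemma std_inj: "partition_on X Q1 \<Longrightarrow> partition_on X Q2 \<Longrightarrow> std Q1 = std Q2 \<Longrightarrow> Q1 = Q2"
proof -
  assume Q: "partition_on X Q1" "partition_on X Q2" "std Q1 = std Q2"
  let ?g = "the_inv_into X (rank_in X)"
  have "Q1 = imgs ?g (std Q1)" unfolding std_eq[OF Q(1)] by (rule sym[OF g_rank[OF Q(1)]])
  also have "\<dots> = imgs ?g (std Q2)" unfolding Q(3) ..
  also have "\<dots> = Q2" unfolding std_eq[OF Q(2)] by (rule g_rank[OF Q(2)])
  finally show ?thesis .
qed

lemma std_surj: "partition_on {1..card X} B \<Longrightarrow> \<exists>Q. partition_on X Q \<and> std Q = B"
proof -
  assume B: "partition_on {1..card X} B"
  let ?g = "the_inv_into X (rank_in X)"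
  have p: "partition_on X (imgs ?g B)" using imgs_part[OF B rank_inv(4)] rank_inv(5) by simp
  have "std (imgs ?g B) = imgs (rank_in X) (imgs ?g B)" by (rule std_eq[OF p])
  also have "\<dots> = B" by (rule rank_g[OF B])
  finally show ?thesis using p by blast
qed

lemma N_char:
  assumes Q: "partition_on X Q"
  shows "(is_part_of (degree (std Q)) B \<and> nc_closure B = std Q) \<longleftrightarrow>
         (\<exists>Q'. partition_on X Q' \<and> B = std Q' \<and> isnc Q' Q)"
proof
  assume a: "is_part_of (degree (std Q)) B \<and> nc_closure B = std Q"
  then have B: "partition_on {1..card X} B" unfolding is_part_of_def std_degree[OF Q] by simp
  obtain Q' where Q': "partition_on X Q'" "std Q' = B" using std_surj[OF B] by blast
  have "isnc B (std Q)" using a nc_closure_eq[OF B] by blast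
  then have "isnc (imgs (the_inv_into X (rank_in X)) B) (imgs (the_inv_into X (rank_in X)) (std Q))"
    by (rule isnc_transport[OF _ B rank_inv(1)])
  moreover have "imgs (the_inv_into X (rank_in X)) B = Q'" unfolding Q'(2)[symmetric] std_eq[OF Q'(1)]
    by (rule g_rank[OF Q'(1)])
  moreover have "imgs (the_inv_into X (rank_in X)) (std Q) = Q" unfolding std_eq[OF Q]
    by (rule g_rank[OF Q])
  ultimately show "\<exists>Q'. partition_on X Q' \<and> B = std Q' \<and> isnc Q' Q" using Q' by auto
next
  assume "\<exists>Q'. partition_on X Q' \<and> B = std Q' \<and> isnc Q' Q"
  then obtain Q' where Q': "partition_on X Q'" "B = std Q'" "isnc Q' Q" by blast
  have B: "partition_on {1..card X} B" using std_part[OF Q'(1)] Q'(2) by simp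
  have "isnc (imgs (rank_in X) Q') (imgs (rank_in X) Q)"
    by (rule isnc_transport[OF Q'(3) Q'(1) rank_strict_mono[OF finX]])
  then have "isnc B (std Q)" unfolding Q'(2) std_eq[OF Q'(1)] std_eq[OF Q] .
  then show "is_part_of (degree (std Q)) B \<and> nc_closure B = std Q"
    using nc_closure_eq[OF B] B unfolding is_part_of_def std_degree[OF Q] by blast
qed

end

definition gx :: "nat \<Rightarrow> nat set \<Rightarrow> nat set list" where
  "gx n S = S # gaps n S"

definition NCs :: "setpart \<Rightarrow> setpart set" where
  "NCs Q = {B. is_part_of (degree Q) B \<and> nc_closure B = Q}"

definition phi :: "nat \<Rightarrow> setpart \<Rightarrow> setpart \<times> nat set set \<Rightarrow> nat set set \<times> setpart list" where
  "phi n P x = (restr P (\<Union>(snd x)), map (\<lambda>X. std (restr (fst x) X)) (gx n (\<Union>(snd x))))"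

definition Tset :: "nat \<Rightarrow> setpart \<Rightarrow> nat set set \<Rightarrow> setpart list set" where
  "Tset n P L = {Cs. list_all2 (\<lambda>C X. C \<in> NCs (std (restr P X))) Cs (gx n (\<Union>L))}"

lemma gx_sepd: "S \<subseteq> {1..n} \<Longrightarrow> sepd {1..n} (gx n S)"
  unfolding gx_def by (rule sepd_gaps)

lemma gx0: "gx n S ! 0 = S" unfolding gx_def by simp

lemma gx_len: "0 < length (gx n S)" unfolding gx_def by simp

lemma gx_fin: "sepd {1..n} Xs \<Longrightarrow> i < length Xs \<Longrightarrow> finite (Xs ! i)"
  by (rule finite_subset[OF sepdD1]) auto

lemma cuts_char_gx: "partition_on {1..n} P \<Longrightarrow> L \<in> cuts P \<longleftrightarrow> L \<subseteq> P \<and> resp (gx n (\<Union>L)) P"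
  unfolding gx_def by (rule cuts_char)

lemma phi_into:
  assumes P: "partition_on {1..n} P"
    and P': "partition_on {1..n} P'" and nc: "isnc P' P" and L': "L' \<in> cuts P'"
  shows "phi n P (P', L') \<in> Sigma (cuts P) (Tset n P)"
proof -
  define S where "S = \<Union>L'"
  have LP: "L' \<subseteq> P'" and r': "resp (gx n S) P'" using L' cuts_char_gx[OF P'] unfolding S_def by auto
  have Sn: "S \<subseteq> {1..n}" using LP part_sub[OF P'] unfolding S_def by blast
  have G: "sepd {1..n} (gx n S)" by (rule gx_sepd[OF Sn])
  have r: "resp (gx n S) P" by (rule meet_resp[OF P' nc G r'])
  have c1: "restr P S \<in> cuts P" and c2: "\<Union>(restr P S) = S"
    using restr_cut[OF P Sn] r unfolding gx_def by auto
  have "map (\<lambda>X. std (restr P' X)) (gx n S) \<in> Tset n P (restr P S)"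
    unfolding Tset_def c2 list_all2_conv_all_nth
  proof (intro CollectI conjI allI impI)
    show "length (map (\<lambda>X. std (restr P' X)) (gx n S)) = length (gx n S)" by simp
    fix i assume "i < length (map (\<lambda>X. std (restr P' X)) (gx n S))"
    then have i: "i < length (gx n S)" by simp
    define X where "X = gx n S ! i"
    have fX: "finite X" unfolding X_def by (rule gx_fin[OF G i])
    have pX: "partition_on X (restr P X)" unfolding X_def by (rule restr_part[OF P G r i])
    have pX': "partition_on X (restr P' X)" unfolding X_def by (rule restr_part[OF P' G r' i])
    have ncX: "isnc (restr P' X) (restr P X)" unfolding X_def by (rule restr_isnc[OF P' nc G r' r i])
    have "\<exists>Q'. partition_on X Q' \<and> std (restr P' X) = std Q' \<and> isnc Q' (restr P X)"
      using pX' ncX by blast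
    then have "std (restr P' X) \<in> NCs (std (restr P X))"
      unfolding NCs_def using N_char[OF fX pX] by blast
    then show "map (\<lambda>X. std (restr P' X)) (gx n S) ! i \<in> NCs (std (restr P (gx n S ! i)))"
      using i unfolding X_def by simp
  qed
  moreover have "phi n P (P', L') = (restr P S, map (\<lambda>X. std (restr P' X)) (gx n S))"
    unfolding phi_def S_def by simp
  ultimately show ?thesis using c1 by simp
qed

lemma phi_inj:
  assumes P: "partition_on {1..n} P"
    and P1: "partition_on {1..n} P1" "isnc P1 P" "L1 \<in> cuts P1"
    and P2: "partition_on {1..n} P2" "isnc P2 P" "L2 \<in> cuts P2"
    and eq: "phi n P (P1, L1) = phi n P (P2, L2)"
  shows "(P1, L1) = (P2, L2)"
proof -
  define S1 where "S1 = \<Union>L1"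
  define S2 where "S2 = \<Union>L2"
  have LP1: "L1 \<subseteq> P1" and r1': "resp (gx n S1) P1" using P1(3) cuts_char_gx[OF P1(1)] unfolding S1_def by auto
  have LP2: "L2 \<subseteq> P2" and r2': "resp (gx n S2) P2" using P2(3) cuts_char_gx[OF P2(1)] unfolding S2_def by auto
  have Sn1: "S1 \<subseteq> {1..n}" using LP1 part_sub[OF P1(1)] unfolding S1_def by blast
  have Sn2: "S2 \<subseteq> {1..n}" using LP2 part_sub[OF P2(1)] unfolding S2_def by blast
  have r1: "resp (gx n S1) P" by (rule meet_resp[OF P1(1) P1(2) gx_sepd[OF Sn1] r1'])
  have r2: "resp (gx n S2) P" by (rule meet_resp[OF P2(1) P2(2) gx_sepd[OF Sn2] r2'])
  have u1: "\<Union>(restr P S1) = S1" using restr_cut[OF P Sn1] r1 unfolding gx_def by auto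
  have u2: "\<Union>(restr P S2) = S2" using restr_cut[OF P Sn2] r2 unfolding gx_def by auto
  have "phi n P (P1, L1) = (restr P S1, map (\<lambda>X. std (restr P1 X)) (gx n S1))"
    unfolding phi_def S1_def by simp
  moreover have "phi n P (P2, L2) = (restr P S2, map (\<lambda>X. std (restr P2 X)) (gx n S2))"
    unfolding phi_def S2_def by simp
  ultimately have e1: "restr P S1 = restr P S2" and
       e2: "map (\<lambda>X. std (restr P1 X)) (gx n S1) = map (\<lambda>X. std (restr P2 X)) (gx n S2)"
    using eq by auto
  have SS: "S1 = S2" using e1 u1 u2 by metis
  define Xs where "Xs = gx n S1"
  have G: "sepd {1..n} Xs" unfolding Xs_def by (rule gx_sepd[OF Sn1])
  have r2'': "resp Xs P2" using r2' unfolding Xs_def SS .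
  have rr: "restr P1 (Xs!i) = restr P2 (Xs!i)" if i: "i < length Xs" for i
  proof -
    have "std (restr P1 (Xs!i)) = std (restr P2 (Xs!i))"
      using e2 i unfolding Xs_def SS by (metis nth_map)
    then show ?thesis
      using std_inj[OF gx_fin[OF G i] restr_part[OF P1(1) G _ i] restr_part[OF P2(1) G r2'' i]] r1'
      unfolding Xs_def by blast
  qed
  have "P1 = P2"
  proof -
    have "P1 = (\<Union>i<length Xs. restr P1 (Xs!i))" using resp_decomp r1' unfolding Xs_def by blast
    also have "\<dots> = (\<Union>i<length Xs. restr P2 (Xs!i))" using rr by simp
    also have "\<dots> = P2" using resp_decomp[OF r2''] by simp
    finally show ?thesis .
  qed
  moreover have "L1 = L2"
  proof -
    have "L1 = restr P1 S1" using cut_restr[OF P1(1) P1(3)] unfolding S1_def .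
    also have "\<dots> = restr P2 S2" using rr[of 0] gx_len gx0 unfolding Xs_def SS by metis
    also have "\<dots> = L2" using cut_restr[OF P2(1) P2(3)] unfolding S2_def by simp
    finally show ?thesis .
  qed
  ultimately show ?thesis by simp
qed

lemma phi_onto:
  assumes P: "partition_on {1..n} P" "noncrossing P"
    and L: "L \<in> cuts P" and Cs: "Cs \<in> Tset n P L"
  shows "\<exists>P' L'. partition_on {1..n} P' \<and> isnc P' P \<and> L' \<in> cuts P' \<and> phi n P (P', L') = (L, Cs)"
proof -
  define S where "S = \<Union>L"
  define Xs where "Xs = gx n S"
  have LP: "L \<subseteq> P" and r: "resp Xs P" using L cuts_char_gx[OF P(1)] unfolding S_def Xs_def by auto
  have Sn: "S \<subseteq> {1..n}" using LP part_sub[OF P(1)] unfolding S_def by blast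
  have G: "sepd {1..n} Xs" unfolding Xs_def by (rule gx_sepd[OF Sn])
  have LS: "L = restr P S" using cut_restr[OF P(1) L] unfolding S_def .
  have len: "length Cs = length Xs" and CsN: "\<And>i. i < length Xs \<Longrightarrow> Cs!i \<in> NCs (std (restr P (Xs!i)))"
    using Cs unfolding Tset_def list_all2_conv_all_nth S_def[symmetric] Xs_def[symmetric] by auto
  have ex: "\<exists>Q'. partition_on (Xs!i) Q' \<and> Cs!i = std Q' \<and> isnc Q' (restr P (Xs!i))"
    if i: "i < length Xs" for i
  proof -
    have fX: "finite (Xs!i)" by (rule gx_fin[OF G i])
    have pX: "partition_on (Xs!i) (restr P (Xs!i))" by (rule restr_part[OF P(1) G r i])
    show ?thesis using CsN[OF i] N_char[OF fX pX] unfolding NCs_def by blast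
  qed
  obtain Qf where Qf: "\<And>i. i < length Xs \<Longrightarrow> partition_on (Xs!i) (Qf i) \<and> Cs!i = std (Qf i) \<and> isnc (Qf i) (restr P (Xs!i))"
    using ex by metis
  define Qs where "Qs = map Qf [0..<length Xs]"
  have Qs_len: "length Qs = length Xs" unfolding Qs_def by simp
  have Qs_nth: "\<And>i. i < length Xs \<Longrightarrow> Qs!i = Qf i" unfolding Qs_def by simp
  have Qpart: "\<And>i. i < length Xs \<Longrightarrow> partition_on (Xs!i) (Qs!i)" using Qf Qs_nth by simp
  define P' where "P' = \<Union>(set Qs)"
  have P'p: "partition_on {1..n} P'" unfolding P'_def by (rule build_part(1)[OF G Qs_len Qpart])
  have r': "resp Xs P'" unfolding P'_def by (rule build_part(2)[OF G Qs_len Qpart])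
  have rP': "\<And>i. i < length Xs \<Longrightarrow> restr P' (Xs!i) = Qf i"
    unfolding P'_def using build_part(3)[OF G Qs_len Qpart] Qs_nth by simp
  have nc: "isnc P' P"
  proof (rule glue_isnc[OF P'p P(1) P(2) G r' r])
    fix i assume i: "i < length Xs"
    show "isnc (restr P' (Xs!i)) (restr P (Xs!i))" using Qf[OF i] rP'[OF i] by simp
  qed
  have X0: "Xs ! 0 = S" "0 < length Xs" unfolding Xs_def using gx0 gx_len by auto
  define L' where "L' = restr P' S"
  have cut': "L' \<in> cuts P'" and uL': "\<Union>L' = S"
    using restr_cut[OF P'p Sn] r' unfolding L'_def Xs_def gx_def by auto
  have "map (\<lambda>X. std (restr P' X)) Xs = Cs"
  proof (rule nth_equalityI)
    show "length (map (\<lambda>X. std (restr P' X)) Xs) = length Cs" using len by simp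
    fix i assume "i < length (map (\<lambda>X. std (restr P' X)) Xs)"
    then have i: "i < length Xs" by simp
    show "map (\<lambda>X. std (restr P' X)) Xs ! i = Cs ! i" using i rP'[OF i] Qf[OF i] by simp
  qed
  then have "phi n P (P', L') = (L, Cs)" unfolding phi_def using uL' LS Xs_def by simp
  then show ?thesis using P'p nc cut' by blast
qed

lemma main_bij:
  assumes P: "partition_on {1..n} P" "noncrossing P"
  shows "bij_betw (phi n P) (Sigma (NCs P) cuts) (Sigma (cuts P) (Tset n P))"
proof -
  have dg: "degree P = n" using P(1) partition_onD1 unfolding degree_def by (metis card_atLeastAtMost diff_Suc_1)
  have NC: "x \<in> NCs P \<longleftrightarrow> partition_on {1..n} x \<and> isnc x P" for x
    unfolding NCs_def dg is_part_of_def using nc_closure_eq by blast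
  show ?thesis unfolding bij_betw_def
  proof (intro conjI)
    show "inj_on (phi n P) (Sigma (NCs P) cuts)"
    proof (rule inj_onI)
      fix x y assume x: "x \<in> Sigma (NCs P) cuts" and y: "y \<in> Sigma (NCs P) cuts" and e: "phi n P x = phi n P y"
      obtain P1 L1 where 1: "x = (P1, L1)" "partition_on {1..n} P1" "isnc P1 P" "L1 \<in> cuts P1" using x NC by auto
      obtain P2 L2 where 2: "y = (P2, L2)" "partition_on {1..n} P2" "isnc P2 P" "L2 \<in> cuts P2" using y NC by auto
      show "x = y" using phi_inj[OF P(1) 1(2,3,4) 2(2,3,4)] e 1(1) 2(1) by simp
    qed
    show "phi n P ` Sigma (NCs P) cuts = Sigma (cuts P) (Tset n P)"
    proof
      show "phi n P ` Sigma (NCs P) cuts \<subseteq> Sigma (cuts P) (Tset n P)"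
      proof
        fix z assume "z \<in> phi n P ` Sigma (NCs P) cuts"
        then obtain P1 L1 where "z = phi n P (P1, L1)" "partition_on {1..n} P1" "isnc P1 P" "L1 \<in> cuts P1"
          using NC by auto
        then show "z \<in> Sigma (cuts P) (Tset n P)" using phi_into[OF P(1)] by blast
      qed
      show "Sigma (cuts P) (Tset n P) \<subseteq> phi n P ` Sigma (NCs P) cuts"
      proof
        fix z assume "z \<in> Sigma (cuts P) (Tset n P)"
        then obtain L Cs where z: "z = (L, Cs)" "L \<in> cuts P" "Cs \<in> Tset n P L" by auto
        obtain P' L' where "partition_on {1..n} P'" "isnc P' P" "L' \<in> cuts P'" "phi n P (P', L') = (L, Cs)"
          using phi_onto[OF P z(2,3)] by blast
        then show "z \<in> phi n P ` Sigma (NCs P) cuts" using z(1) NC by (metis SigmaI image_eqI)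
      qed
    qed
  qed
qed

lemma lookup_scale [simp]: "Poly_Mapping.lookup (scale c x) k = c * Poly_Mapping.lookup x k"
  unfolding scale_def by (simp add: Poly_Mapping.map.rep_eq when_def)

lemma scale_add: "scale c (x + y) = scale c x + scale c y"
  by (rule poly_mapping_eqI) (simp add: lookup_add algebra_simps)

lemma scale_add_left: "scale (a + b) x = scale a x + scale b x"
  by (rule poly_mapping_eqI) (simp add: lookup_add algebra_simps)

lemma scale_scale: "scale a (scale b x) = scale (a * b) x"
  by (rule poly_mapping_eqI) (simp add: algebra_simps)

lemma scale_one [simp]: "scale 1 x = x"
  by (rule poly_mapping_eqI) simp

lemma scale_zero_left [simp]: "scale 0 x = 0"
  by (rule poly_mapping_eqI) simp

lemma scale_zero_right [simp]: "scale c 0 = 0"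
  by (rule poly_mapping_eqI) simp

lemma scale_sum: "scale c (sum f A) = (\<Sum>i\<in>A. scale c (f i))"
  by (rule poly_mapping_eqI) (simp add: lookup_sum sum_distrib_left)

lemma scale_single: "scale c (Poly_Mapping.single k v) = Poly_Mapping.single k (c * v)"
  by (rule poly_mapping_eqI) (simp add: lookup_single when_def)

lemma scale_mon: "scale c (mon w) = Poly_Mapping.single w c"
  unfolding mon_def scale_single by simp

lemma keys_scale: "Poly_Mapping.keys (scale c x) \<subseteq> Poly_Mapping.keys x"
  by (auto simp: in_keys_iff)

lemma lin_alt: "finite K \<Longrightarrow> Poly_Mapping.keys x \<subseteq> K \<Longrightarrow>
   lin F x = (\<Sum>w\<in>K. scale (Poly_Mapping.lookup x w) (F w))"
  unfolding lin_def by (rule sum.mono_neutral_left) (auto simp: in_keys_iff)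

lemma lin_add: "lin F (x + y) = lin F x + lin F y"
proof -
  let ?K = "Poly_Mapping.keys x \<union> Poly_Mapping.keys y"
  have f: "finite ?K" by simp
  have "lin F (x + y) = (\<Sum>w\<in>?K. scale (Poly_Mapping.lookup (x + y) w) (F w))"
    by (rule lin_alt[OF f]) (rule keys_add)
  also have "\<dots> = (\<Sum>w\<in>?K. scale (Poly_Mapping.lookup x w) (F w)) + (\<Sum>w\<in>?K. scale (Poly_Mapping.lookup y w) (F w))"
    by (simp add: lookup_add scale_add_left sum.distrib)
  also have "\<dots> = lin F x + lin F y"
    using lin_alt[OF f, of x F] lin_alt[OF f, of y F] by simp
  finally show ?thesis .
qed

lemma lin_scale: "lin F (scale c x) = scale c (lin F x)"
proof -
  have "lin F (scale c x) = (\<Sum>w\<in>Poly_Mapping.keys x. scale (Poly_Mapping.lookup (scale c x) w) (F w))"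
    by (rule lin_alt) (simp_all add: keys_scale)
  also have "\<dots> = scale c (lin F x)" unfolding lin_def scale_sum by (simp add: scale_scale)
  finally show ?thesis .
qed

lemma lin_zero [simp]: "lin F 0 = 0"
  unfolding lin_def by simp

lemma lin_single: "lin F (Poly_Mapping.single w c) = scale c (F w)"
proof -
  have "lin F (Poly_Mapping.single w c) = (\<Sum>v\<in>{w}. scale (Poly_Mapping.lookup (Poly_Mapping.single w c) v) (F v))"
    by (rule lin_alt) auto
  then show ?thesis by simp
qed

lemma lin_mon [simp]: "lin F (mon w) = F w"
  unfolding mon_def lin_single by simp

lemma lin_sum: "lin F (sum g A) = (\<Sum>i\<in>A. lin F (g i))"
proof (cases "finite A")
  case True
  then show ?thesis by (induction A rule: finite_induct) (simp_all add: lin_add)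
qed simp

lemma lin_fun_add: "lin (\<lambda>w. F w + G w) x = lin F x + lin G x"
  unfolding lin_def by (simp add: scale_add sum.distrib)

lemma lin_fun_scale: "lin (\<lambda>w. scale c (F w)) x = scale c (lin F x)"
  unfolding lin_def by (simp add: scale_scale scale_sum mult.commute)

lemma lin_fun_zero [simp]: "lin (\<lambda>w. 0) x = 0"
  unfolding lin_def by simp

lemma lin_fun_sum: "lin (\<lambda>w. \<Sum>i\<in>A. G i w) x = (\<Sum>i\<in>A. lin (G i) x)"
proof (cases "finite A")
  case True
  then show ?thesis by (induction A rule: finite_induct) (simp_all add: lin_fun_add)
qed simp

lemma lin_cong: "(\<And>w. w \<in> Poly_Mapping.keys x \<Longrightarrow> F w = G w) \<Longrightarrow> lin F x = lin G x"
  unfolding lin_def by simp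

lemma lin_mon_id: "lin mon x = x"
proof (rule poly_mapping_eqI)
  fix k
  have "Poly_Mapping.lookup (lin mon x) k =
        (\<Sum>w\<in>Poly_Mapping.keys x. Poly_Mapping.lookup x w * (1 when w = k))"
    unfolding lin_def by (simp add: lookup_sum mon_def lookup_single)
  also have "\<dots> = (\<Sum>w\<in>Poly_Mapping.keys x. if w = k then Poly_Mapping.lookup x w else 0)"
    by (rule sum.cong) (simp_all add: when_def)
  also have "\<dots> = Poly_Mapping.lookup x k"
    by (simp add: sum.delta in_keys_iff)
  finally show "Poly_Mapping.lookup (lin mon x) k = Poly_Mapping.lookup x k" .
qed

lemma keys_sum_sub: "Poly_Mapping.keys (sum f A) \<subseteq> (\<Union>i\<in>A. Poly_Mapping.keys (f i))"
proof (cases "finite A")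
  case True
  then show ?thesis
  proof (induction A rule: finite_induct)
    case (insert a A)
    then show ?case using keys_add[of "f a" "sum f A"] by auto
  qed simp
qed simp

lemma keys_lin: "Poly_Mapping.keys (lin F x) \<subseteq> (\<Union>w\<in>Poly_Mapping.keys x. Poly_Mapping.keys (F w))"
  unfolding lin_def using keys_sum_sub keys_scale by fastforce

definition linmap :: "(('a \<Rightarrow>\<^sub>0 'k::comm_ring_1) \<Rightarrow> ('b \<Rightarrow>\<^sub>0 'k)) \<Rightarrow> bool" where
  "linmap f \<longleftrightarrow> (\<forall>a b. f (a + b) = f a + f b) \<and> (\<forall>c a. f (scale c a) = scale c (f a))"

lemma linmapI: "(\<And>a b. f (a + b) = f a + f b) \<Longrightarrow> (\<And>c a. f (scale c a) = scale c (f a)) \<Longrightarrow> linmap f"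
  unfolding linmap_def by blast

lemma linmap_add: "linmap f \<Longrightarrow> f (a + b) = f a + f b"
  unfolding linmap_def by blast

lemma linmap_scale: "linmap f \<Longrightarrow> f (scale c a) = scale c (f a)"
  unfolding linmap_def by blast

lemma linmap_zero: "linmap f \<Longrightarrow> f 0 = 0"
  using linmap_scale[of f 0 0] by simp

lemma linmap_sum: "linmap f \<Longrightarrow> f (sum g A) = (\<Sum>i\<in>A. f (g i))"
proof (cases "finite A")
  case True
  assume l: "linmap f"
  from True show ?thesis by (induction A rule: finite_induct) (simp_all add: linmap_zero[OF l] linmap_add[OF l])
next
  case False
  assume l: "linmap f"
  then show ?thesis using False linmap_zero[OF l] by simp
qed

lemma linmap_lin: "linmap (lin F)"
  by (rule linmapI) (simp_all add: lin_add lin_scale)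

lemma linmap_repr:
  assumes l: "linmap f"
  shows "f x = lin (\<lambda>w. f (mon w)) x"
proof -
  have "f x = f (lin mon x)" by (simp add: lin_mon_id)
  also have "\<dots> = (\<Sum>w\<in>Poly_Mapping.keys x. f (scale (Poly_Mapping.lookup x w) (mon w)))"
    unfolding lin_def by (rule linmap_sum[OF l])
  also have "\<dots> = lin (\<lambda>w. f (mon w)) x" unfolding lin_def by (simp add: linmap_scale[OF l])
  finally show ?thesis .
qed

lemma linmap_eq:
  assumes "linmap f" "linmap g" "\<And>w. w \<in> Poly_Mapping.keys x \<Longrightarrow> f (mon w) = g (mon w)"
  shows "f x = g x"
  using linmap_repr[OF assms(1), of x] linmap_repr[OF assms(2), of x] lin_cong[of x "\<lambda>w. f (mon w)" "\<lambda>w. g (mon w)"] assms(3)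
  by simp

lemma linmap_eq_all:
  assumes "linmap f" "linmap g" "\<And>w. f (mon w) = g (mon w)"
  shows "f x = g x"
  using linmap_eq[OF assms(1,2)] assms(3) by blast

lemma linmap_comp: "linmap f \<Longrightarrow> linmap g \<Longrightarrow> linmap (\<lambda>x. f (g x))"
  unfolding linmap_def by simp

definition bil :: "('a \<Rightarrow> 'b \<Rightarrow> ('c \<Rightarrow>\<^sub>0 'k::comm_ring_1)) \<Rightarrow> ('a \<Rightarrow>\<^sub>0 'k) \<Rightarrow> ('b \<Rightarrow>\<^sub>0 'k) \<Rightarrow> ('c \<Rightarrow>\<^sub>0 'k)" where
  "bil H x y = lin (\<lambda>u. lin (\<lambda>v. H u v) y) x"

lemma bil_mon [simp]: "bil H (mon u) (mon v) = H u v"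
  unfolding bil_def by simp

lemma linmap_bil1: "linmap (\<lambda>x. bil H x y)"
  unfolding bil_def by (rule linmap_lin)

lemma linmap_bil2: "linmap (\<lambda>y. bil H x y)"
  unfolding bil_def by (rule linmapI) (simp_all add: lin_add lin_scale lin_fun_add lin_fun_scale)

lemma bil_expand: "bil H x y = (\<Sum>u\<in>Poly_Mapping.keys x. \<Sum>v\<in>Poly_Mapping.keys y.
     scale (Poly_Mapping.lookup x u * Poly_Mapping.lookup y v) (H u v))"
  unfolding bil_def lin_def by (simp add: scale_sum scale_scale)

lemma bil_sum1: "bil H (sum f A) y = (\<Sum>i\<in>A. bil H (f i) y)"
  using linmap_sum[OF linmap_bil1] .

lemma bil_sum2: "bil H x (sum f A) = (\<Sum>i\<in>A. bil H x (f i))"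
  using linmap_sum[OF linmap_bil2] .

lemma wmult_bil: "wmult x y = bil (\<lambda>u v. mon (u @ v)) x y"
  unfolding wmult_def bil_expand by (simp add: scale_mon)

lemma tmult_bil: "tmult x y = bil (\<lambda>u v. mon (fst u @ fst v, snd u @ snd v)) x y"
  unfolding tmult_def bil_expand by (simp add: scale_mon)

lemma tensor_bil: "tensor x y = bil (\<lambda>u v. mon (u, v)) x y"
  unfolding tensor_def bil_expand by (simp add: scale_mon)

lemma linmap_id: "linmap (\<lambda>x. x)"
  by (rule linmapI) simp_all

lemma linmap_const_bil1: "linmap (\<lambda>x. bil H (f x) y)" if "linmap f"
  using linmap_comp[OF linmap_bil1 that] .

lemma bil_assoc:
  assumes H: "\<And>u v. H u v = mon (m u v)" and A: "\<And>u v w. m (m u v) w = m u (m v w)"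
  shows "bil H (bil H x y) z = bil H x (bil H y z)"
proof (rule linmap_eq_all[where x = x])
  show "linmap (\<lambda>x. bil H (bil H x y) z)" using linmap_comp[OF linmap_bil1 linmap_bil1] .
  show "linmap (\<lambda>x. bil H x (bil H y z))" by (rule linmap_bil1)
  fix u
  show "bil H (bil H (mon u) y) z = bil H (mon u) (bil H y z)"
  proof (rule linmap_eq_all[where x = y])
    show "linmap (\<lambda>y. bil H (bil H (mon u) y) z)" using linmap_comp[OF linmap_bil1 linmap_bil2] .
    show "linmap (\<lambda>y. bil H (mon u) (bil H y z))" using linmap_comp[OF linmap_bil2 linmap_bil1] .
    fix v
    show "bil H (bil H (mon u) (mon v)) z = bil H (mon u) (bil H (mon v) z)"
    proof (rule linmap_eq_all[where x = z])
      show "linmap (\<lambda>z. bil H (bil H (mon u) (mon v)) z)" by (rule linmap_bil2)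
      show "linmap (\<lambda>z. bil H (mon u) (bil H (mon v) z))" using linmap_comp[OF linmap_bil2 linmap_bil2] .
      fix w
      show "bil H (bil H (mon u) (mon v)) (mon w) = bil H (mon u) (bil H (mon v) (mon w))"
        by (simp add: H A)
    qed
  qed
qed

lemma bil_unit:
  assumes H: "\<And>v. H e v = mon v" "\<And>u. H u e = mon u"
  shows "bil H (mon e) x = x" "bil H x (mon e) = x"
proof -
  show "bil H (mon e) x = x"
    by (rule linmap_eq_all[OF linmap_bil2 linmap_id]) (simp add: H)
  show "bil H x (mon e) = x"
    by (rule linmap_eq_all[OF linmap_bil1 linmap_id]) (simp add: H)
qed

lemma bil_hom:
  assumes f: "linmap f" and h: "\<And>u v. f (H u v) = bil H' (f (mon u)) (f (mon v))"
  shows "f (bil H x y) = bil H' (f x) (f y)"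
proof (rule linmap_eq_all[where x = x])
  show "linmap (\<lambda>x. f (bil H x y))" using linmap_comp[OF f linmap_bil1] .
  show "linmap (\<lambda>x. bil H' (f x) (f y))" using linmap_comp[OF linmap_bil1 f] .
  fix u
  show "f (bil H (mon u) y) = bil H' (f (mon u)) (f y)"
  proof (rule linmap_eq_all[where x = y])
    show "linmap (\<lambda>y. f (bil H (mon u) y))" using linmap_comp[OF f linmap_bil2] .
    show "linmap (\<lambda>y. bil H' (f (mon u)) (f y))" using linmap_comp[OF linmap_bil2 f] .
    fix v
    show "f (bil H (mon u) (mon v)) = bil H' (f (mon u)) (f (mon v))" using h by simp
  qed
qed

lemma wmult_mon: "wmult (mon u) (mon v) = mon (u @ v)"
  unfolding wmult_bil by simp

lemma tmult_mon: "tmult (mon u) (mon v) = mon (fst u @ fst v, snd u @ snd v)"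
  unfolding tmult_bil by simp

lemma tensor_mon: "tensor (mon u) (mon v) = mon (u, v)"
  unfolding tensor_bil by simp

lemma wmult_assoc: "wmult (wmult x y) z = wmult x (wmult y z)"
  unfolding wmult_bil by (rule bil_assoc[where m = "(@)"]) simp_all

lemma tmult_assoc: "tmult (tmult x y) z = tmult x (tmult y z)"
  unfolding tmult_bil by (rule bil_assoc[where m = "\<lambda>u v. (fst u @ fst v, snd u @ snd v)"]) simp_all

lemma wmult_unit: "wmult (mon []) x = x" "wmult x (mon []) = x"
  unfolding wmult_bil by (rule bil_unit; simp)+

lemma tmult_unit: "tmult (mon ([], [])) x = x" "tmult x (mon ([], [])) = x"
  unfolding tmult_bil by (rule bil_unit; simp)+

lemma wprod_Cons: "wprod (a # xs) = wmult a (wprod xs)"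
  unfolding wprod_def by simp

lemma wprod_Nil: "wprod [] = mon []"
  unfolding wprod_def by simp

lemma tprod_Cons: "tprod (a # xs) = tmult a (tprod xs)"
  unfolding tprod_def by simp

lemma tprod_Nil: "tprod [] = mon ([], [])"
  unfolding tprod_def by simp

lemma wprod_append: "wprod (xs @ ys) = wmult (wprod xs) (wprod ys)"
  by (induction xs) (simp_all add: wprod_Cons wprod_Nil wmult_unit wmult_assoc)

lemma tprod_append: "tprod (xs @ ys) = tmult (tprod xs) (tprod ys)"
  by (induction xs) (simp_all add: tprod_Cons tprod_Nil tmult_unit tmult_assoc)

lemma linmap_wmult1: "linmap (\<lambda>x. wmult x y)" unfolding wmult_bil by (rule linmap_bil1)
lemma linmap_wmult2: "linmap (\<lambda>y. wmult x y)" unfolding wmult_bil by (rule linmap_bil2)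
lemma linmap_tmult1: "linmap (\<lambda>x. tmult x y)" unfolding tmult_bil by (rule linmap_bil1)
lemma linmap_tmult2: "linmap (\<lambda>y. tmult x y)" unfolding tmult_bil by (rule linmap_bil2)
lemma linmap_tensor1: "linmap (\<lambda>x. tensor x y)" unfolding tensor_bil by (rule linmap_bil1)
lemma linmap_tensor2: "linmap (\<lambda>y. tensor x y)" unfolding tensor_bil by (rule linmap_bil2)

lemma tensor_tmult: "tmult (tensor a b) (tensor c d) = tensor (wmult a c) (wmult b d)"
proof (rule linmap_eq_all[where x = a])
  show "linmap (\<lambda>a. tmult (tensor a b) (tensor c d))" using linmap_comp[OF linmap_tmult1 linmap_tensor1] .
  show "linmap (\<lambda>a. tensor (wmult a c) (wmult b d))" using linmap_comp[OF linmap_tensor1 linmap_wmult1] .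
  fix u1
  show "tmult (tensor (mon u1) b) (tensor c d) = tensor (wmult (mon u1) c) (wmult b d)"
  proof (rule linmap_eq_all[where x = b])
    show "linmap (\<lambda>b. tmult (tensor (mon u1) b) (tensor c d))" using linmap_comp[OF linmap_tmult1 linmap_tensor2] .
    show "linmap (\<lambda>b. tensor (wmult (mon u1) c) (wmult b d))" using linmap_comp[OF linmap_tensor2 linmap_wmult1] .
    fix v1
    show "tmult (tensor (mon u1) (mon v1)) (tensor c d) = tensor (wmult (mon u1) c) (wmult (mon v1) d)"
    proof (rule linmap_eq_all[where x = c])
      show "linmap (\<lambda>c. tmult (tensor (mon u1) (mon v1)) (tensor c d))" using linmap_comp[OF linmap_tmult2 linmap_tensor1] .
      show "linmap (\<lambda>c. tensor (wmult (mon u1) c) (wmult (mon v1) d))" using linmap_comp[OF linmap_tensor1 linmap_wmult2] .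
      fix u2
      show "tmult (tensor (mon u1) (mon v1)) (tensor (mon u2) d) = tensor (wmult (mon u1) (mon u2)) (wmult (mon v1) d)"
      proof (rule linmap_eq_all[where x = d])
        show "linmap (\<lambda>d. tmult (tensor (mon u1) (mon v1)) (tensor (mon u2) d))" using linmap_comp[OF linmap_tmult2 linmap_tensor2] .
        show "linmap (\<lambda>d. tensor (wmult (mon u1) (mon u2)) (wmult (mon v1) d))" using linmap_comp[OF linmap_tensor2 linmap_wmult2] .
        fix v2
        show "tmult (tensor (mon u1) (mon v1)) (tensor (mon u2) (mon v2)) = tensor (wmult (mon u1) (mon u2)) (wmult (mon v1) (mon v2))"
          by (simp add: tensor_mon tmult_mon wmult_mon)
      qed
    qed
  qed
qed

lemma linmap_ncstar: "linmap ncstar" unfolding ncstar_def by (rule linmap_lin)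
lemma ncstar_mon: "ncstar (mon w) = wprod (map ncstar_gen w)" unfolding ncstar_def by simp

lemma ncstar_mult: "ncstar (wmult x y) = wmult (ncstar x) (ncstar y)"
  unfolding wmult_bil
  by (rule bil_hom[OF linmap_ncstar]) (simp add: ncstar_mon wprod_append wmult_bil[symmetric])

lemma linmap_cop0: "linmap cop0" unfolding cop0_def by (rule linmap_lin)
lemma cop0_mon: "cop0 (mon w) = tprod (map cop0_gen w)" unfolding cop0_def by simp

lemma cop0_mult: "cop0 (wmult x y) = tmult (cop0 x) (cop0 y)"
  unfolding wmult_bil tmult_bil
  by (rule bil_hom[OF linmap_cop0]) (simp add: cop0_mon tprod_append tmult_bil[symmetric])

lemma linmap_cop: "linmap cop" unfolding cop_def by (rule linmap_lin)
lemma cop_mon: "cop (mon w) = tprod (map cop_gen w)" unfolding cop_def by simp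

lemma linmap_tmap: "linmap (tmap f)" unfolding tmap_def by (rule linmap_lin)
lemma tmap_mon: "tmap f (mon (u, v)) = tensor (f (mon u)) (f (mon v))" unfolding tmap_def by simp

lemma tmap_mult:
  assumes fm: "\<And>x y. f (wmult x y) = wmult (f x) (f y)"
  shows "tmap f (tmult a b) = tmult (tmap f a) (tmap f b)"
  unfolding tmult_bil
proof (rule bil_hom[OF linmap_tmap])
  fix u v :: "setpart list \<times> setpart list"
  obtain u1 v1 where u: "u = (u1, v1)" by (cases u)
  obtain u2 v2 where v: "v = (u2, v2)" by (cases v)
  show "tmap f (mon (fst u @ fst v, snd u @ snd v)) =
        bil (\<lambda>u v. mon (fst u @ fst v, snd u @ snd v)) (tmap f (mon u)) (tmap f (mon v))"
    unfolding tmult_bil[symmetric] u v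
    by (simp add: tmap_mon tensor_tmult wmult_mon[symmetric] fm)
qed

lemma linmap_quot: "linmap quot" unfolding quot_def by (rule linmap_lin)
lemma quot_mon: "quot (mon w) = mon (filter (\<lambda>P. P \<noteq> {}) w)" unfolding quot_def by simp

lemma quot_mult: "quot (wmult x y) = wmult (quot x) (quot y)"
  unfolding wmult_bil
  by (rule bil_hom[OF linmap_quot]) (simp add: quot_mon)

definition qt2 :: "'k::comm_ring_1 alg2 \<Rightarrow> 'k alg2" where
  "qt2 z = lin (\<lambda>(u, v). mon (filter (\<lambda>P. P \<noteq> {}) u, filter (\<lambda>P. P \<noteq> {}) v)) z"

lemma linmap_qt2: "linmap qt2" unfolding qt2_def by (rule linmap_lin)
lemma qt2_mon: "qt2 (mon (u, v)) = mon (filter (\<lambda>P. P \<noteq> {}) u, filter (\<lambda>P. P \<noteq> {}) v)" unfolding qt2_def by simp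

lemma qt2_mult: "qt2 (tmult x y) = tmult (qt2 x) (qt2 y)"
  unfolding tmult_bil
proof (rule bil_hom[OF linmap_qt2])
  fix u v :: "setpart list \<times> setpart list"
  obtain u1 v1 where u: "u = (u1, v1)" by (cases u)
  obtain u2 v2 where v: "v = (u2, v2)" by (cases v)
  show "qt2 (mon (fst u @ fst v, snd u @ snd v)) =
        bil (\<lambda>u v. mon (fst u @ fst v, snd u @ snd v)) (qt2 (mon u)) (qt2 (mon v))"
    unfolding u v by (simp add: qt2_mon)
qed

lemma qt2_tensor: "qt2 (tensor a b) = tensor (quot a) (quot b)"
proof (rule linmap_eq_all[where x = a])
  show "linmap (\<lambda>a. qt2 (tensor a b))" using linmap_comp[OF linmap_qt2 linmap_tensor1] .
  show "linmap (\<lambda>a. tensor (quot a) (quot b))" using linmap_comp[OF linmap_tensor1 linmap_quot] .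
  fix u
  show "qt2 (tensor (mon u) b) = tensor (quot (mon u)) (quot b)"
  proof (rule linmap_eq_all[where x = b])
    show "linmap (\<lambda>b. qt2 (tensor (mon u) b))" using linmap_comp[OF linmap_qt2 linmap_tensor2] .
    show "linmap (\<lambda>b. tensor (quot (mon u)) (quot b))" using linmap_comp[OF linmap_tensor2 linmap_quot] .
    fix v
    show "qt2 (tensor (mon u) (mon v)) = tensor (quot (mon u)) (quot (mon v))"
      by (simp add: tensor_mon qt2_mon quot_mon)
  qed
qed

lemma ncstar_gen_eq: "ncstar_gen P = (\<Sum>P'\<in>NCs P. mon [P'])"
  unfolding ncstar_gen_def NCs_def ..

lemma finite_NCs: "finite (NCs Q)"
proof (rule finite_subset)
  show "NCs Q \<subseteq> {B. partition_on {1..degree Q} B}" unfolding NCs_def is_part_of_def by blast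
  show "finite {B. partition_on {1..degree Q} B}" by (rule finitely_many_partition_on) simp
qed

definition LS :: "setpart list \<Rightarrow> setpart list set" where
  "LS Us = {Bs. list_all2 (\<lambda>B U. B \<in> NCs U) Bs Us}"

lemma LS_Nil: "LS [] = {[]}" unfolding LS_def by auto

lemma LS_Cons: "LS (U # Us) = (\<lambda>(B, Bs). B # Bs) ` (NCs U \<times> LS Us)"
  unfolding LS_def by (auto simp: list_all2_Cons2)

lemma finite_LS: "finite (LS Us)"
  by (induction Us) (simp_all add: LS_Nil LS_Cons finite_NCs)

lemma inj_Cons_pair: "inj_on (\<lambda>(B, Bs). B # Bs) X"
  by (rule inj_onI) auto

lemma wmult_sums:
  "wmult (\<Sum>a\<in>A. f a) (\<Sum>b\<in>B. g b) = (\<Sum>a\<in>A. \<Sum>b\<in>B. wmult (f a) (g b))"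
  unfolding wmult_bil bil_sum1 by (simp add: bil_sum2)

lemma tensor_sums:
  "tensor (\<Sum>a\<in>A. f a) (\<Sum>b\<in>B. g b) = (\<Sum>a\<in>A. \<Sum>b\<in>B. tensor (f a) (g b))"
  unfolding tensor_bil bil_sum1 by (simp add: bil_sum2)

lemma wprod_expand: "wprod (map ncstar_gen Us) = (\<Sum>Bs\<in>LS Us. mon Bs :: 'k::comm_ring_1 alg)"
proof (induction Us)
  case Nil
  then show ?case by (simp add: wprod_Nil LS_Nil)
next
  case (Cons U Us)
  have "wprod (map ncstar_gen (U # Us)) = wmult (ncstar_gen U) (wprod (map ncstar_gen Us) :: 'k alg)"
    by (simp add: wprod_Cons)
  also have "\<dots> = wmult (\<Sum>B\<in>NCs U. mon [B]) (\<Sum>Bs\<in>LS Us. mon Bs)"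
    unfolding Cons.IH ncstar_gen_eq[of U] ..
  also have "\<dots> = (\<Sum>B\<in>NCs U. \<Sum>Bs\<in>LS Us. mon (B # Bs))"
    unfolding wmult_sums by (simp add: wmult_mon)
  also have "\<dots> = (\<Sum>z\<in>NCs U \<times> LS Us. mon ((\<lambda>(B, Bs). B # Bs) z))"
    by (simp add: sum.cartesian_product prod.case_distrib)
  also have "\<dots> = (\<Sum>Cs\<in>(\<lambda>(B, Bs). B # Bs) ` (NCs U \<times> LS Us). mon Cs)"
    by (rule sum.reindex[OF inj_Cons_pair, symmetric, unfolded comp_def])
  also have "\<dots> = (\<Sum>Cs\<in>LS (U # Us). mon Cs)" unfolding LS_Cons ..
  finally show ?case .
qed

lemma ncstar_single: "ncstar (mon [Q]) = ncstar_gen Q"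
  by (simp add: ncstar_mon wprod_Cons wprod_Nil wmult_unit)

lemma induced_restr:
  assumes P: "partition_on A P" and G: "sepd A Xs" and r: "resp Xs P" and i: "i < length Xs"
  shows "induced P (Xs!i) = restr P (Xs!i)"
proof
  show "induced P (Xs!i) \<subseteq> restr P (Xs!i)"
  proof
    fix c assume "c \<in> induced P (Xs!i)"
    then obtain b where b: "b \<in> P" "c = b \<inter> Xs!i" "b \<inter> Xs!i \<noteq> {}" unfolding induced_def by blast
    obtain j where j: "j < length Xs" "b \<subseteq> Xs!j" using respD[OF r b(1)] by blast
    obtain x where x: "x \<in> b" "x \<in> Xs!i" using b(3) by blast
    have "j = i" using sepdD3[OF G j(1) i] x j(2) by blast
    then have "b \<subseteq> Xs!i" using j by simp
    then show "c \<in> restr P (Xs!i)" using b unfolding restr_def by (simp add: Int_absorb2)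
  qed
  show "restr P (Xs!i) \<subseteq> induced P (Xs!i)"
  proof
    fix c assume c: "c \<in> restr P (Xs!i)"
    then have c1: "c \<in> P" "c \<subseteq> Xs!i" unfolding restr_def by auto
    have "c \<noteq> {}" using partition_onD3[OF P] c1 by blast
    then show "c \<in> induced P (Xs!i)" unfolding induced_def using c1 by (intro CollectI exI[of _ c]) auto
  qed
qed

lemma induced_restr_gaps:
  assumes P: "partition_on {1..n} P" and Sn: "S \<subseteq> {1..n}" and r: "resp (gx n S) P"
    and D: "D \<in> set (gaps n S)"
  shows "induced P D = restr P D"
proof -
  obtain j where j: "j < length (gaps n S)" "gaps n S ! j = D" using D by (metis in_set_conv_nth)
  have "gx n S ! Suc j = D" "Suc j < length (gx n S)" using j unfolding gx_def by auto
  then show ?thesis using induced_restr[OF P gx_sepd[OF Sn] r] by metis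
qed

lemma degree_part: "partition_on {1..n} P \<Longrightarrow> degree P = n"
  using partition_onD1 unfolding degree_def by (metis card_atLeastAtMost diff_Suc_1)

lemma upper_parts_eq:
  assumes P: "partition_on {1..n} P" and L: "L \<in> cuts P"
  shows "upper_parts P L = map (\<lambda>D. std (restr P D)) (gaps n (\<Union>L))"
proof -
  have LP: "L \<subseteq> P" and r: "resp (gx n (\<Union>L)) P" using L cuts_char_gx[OF P] by auto
  have Sn: "\<Union>L \<subseteq> {1..n}" using LP part_sub[OF P] by blast
  show ?thesis unfolding upper_parts_def degree_part[OF P]
    by (rule map_cong[OF refl]) (simp add: induced_restr_gaps[OF P Sn r])
qed

definition Gf :: "nat set set \<times> setpart list \<Rightarrow> 'k::comm_ring_1 alg2" where
  "Gf z = mon ([hd (snd z)], tl (snd z))"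

lemma lhs_pointwise:
  assumes P: "partition_on {1..n} P" and P': "partition_on {1..n} P'" and L': "L' \<in> cuts P'"
  shows "Poly_Mapping.single ([std L'], upper_parts P' L') 1 = Gf (phi n P (P', L'))"
proof -
  have "phi n P (P', L') = (restr P (\<Union>L'), map (\<lambda>X. std (restr P' X)) (gx n (\<Union>L')))"
    unfolding phi_def by simp
  moreover have "std (restr P' (\<Union>L')) = std L'" using cut_restr[OF P' L'] by simp
  ultimately show ?thesis unfolding Gf_def mon_def upper_parts_eq[OF P' L'] gx_def by simp
qed

lemma Tset_eq:
  assumes P: "partition_on {1..n} P" and L: "L \<in> cuts P"
  shows "Tset n P L = (\<lambda>(B, Bs). B # Bs) ` (NCs (std L) \<times> LS (upper_parts P L))"
proof -
  define S where "S = \<Union>L"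
  have LP: "L \<subseteq> P" and r: "resp (gx n S) P" using L cuts_char_gx[OF P] unfolding S_def by auto
  have Sn: "S \<subseteq> {1..n}" using LP part_sub[OF P] unfolding S_def by blast
  have LS: "L = restr P S" using cut_restr[OF P L] unfolding S_def .
  have up: "upper_parts P L = map (\<lambda>D. std (restr P D)) (gaps n S)" using upper_parts_eq[OF P L] unfolding S_def .
  have "LS (upper_parts P L) = {Bs. list_all2 (\<lambda>C X. C \<in> NCs (std (restr P X))) Bs (gaps n S)}"
    unfolding LS_def up list_all2_map2 ..
  then show ?thesis
    unfolding Tset_def S_def[symmetric] gx_def LS[symmetric]
    by (auto simp: list_all2_Cons2 LS[symmetric])
qed

lemma finite_cuts: "partition_on {1..n} P \<Longrightarrow> finite (cuts P)"
proof -
  assume P: "partition_on {1..n} P"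
  have "finite P" using finite_elements[OF _ P] by simp
  moreover have "cuts P \<subseteq> Pow P" unfolding cuts_def lowerset_def by blast
  ultimately show ?thesis using finite_subset by blast
qed

lemma core_B:
  assumes P: "partition_on {1..n} P" "noncrossing P"
  shows "cop0 (ncstar_gen P :: 'k::comm_ring_1 alg) = tmap ncstar (cop0_gen P)"
proof -
  have NCp: "\<And>P'. P' \<in> NCs P \<Longrightarrow> partition_on {1..n} P'"
    unfolding NCs_def is_part_of_def degree_part[OF P(1)] by blast
  have fc: "\<And>P'. P' \<in> NCs P \<Longrightarrow> finite (cuts P')" using finite_cuts NCp by blast
  have "cop0 (ncstar_gen P :: 'k alg) = (\<Sum>P'\<in>NCs P. cop0_gen P')"
    unfolding ncstar_gen_eq linmap_sum[OF linmap_cop0]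
    by (simp add: cop0_mon tprod_Cons tprod_Nil tmult_unit)
  also have "\<dots> = (\<Sum>P'\<in>NCs P. \<Sum>L'\<in>cuts P'. Poly_Mapping.single ([std L'], upper_parts P' L') 1)"
    unfolding cop0_gen_def ..
  also have "\<dots> = (\<Sum>z\<in>Sigma (NCs P) cuts. Poly_Mapping.single ([std (snd z)], upper_parts (fst z) (snd z)) 1)"
    by (subst sum.Sigma) (simp_all add: finite_NCs fc split_def)
  also have "\<dots> = (\<Sum>z\<in>Sigma (NCs P) cuts. Gf (phi n P z))"
  proof (rule sum.cong[OF refl])
    fix z assume "z \<in> Sigma (NCs P) cuts"
    then obtain a b where z: "z = (a, b)" "a \<in> NCs P" "b \<in> cuts a" by blast
    show "Poly_Mapping.single ([std (snd z)], upper_parts (fst z) (snd z)) 1 = (Gf (phi n P z) :: 'k alg2)"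
      using lhs_pointwise[OF P(1) NCp[OF z(2)] z(3)] z(1) by simp
  qed
  also have "\<dots> = (\<Sum>z\<in>Sigma (cuts P) (Tset n P). Gf z)"
    by (rule sum.reindex_bij_betw[OF main_bij[OF P]])
  also have "\<dots> = (\<Sum>L\<in>cuts P. \<Sum>Cs\<in>Tset n P L. Gf (L, Cs))"
    by (subst sum.Sigma) (simp_all add: finite_cuts[OF P(1)] Tset_eq[OF P(1)] finite_NCs finite_LS)
  also have "\<dots> = (\<Sum>L\<in>cuts P. tmap ncstar (Poly_Mapping.single ([std L], upper_parts P L) 1))"
  proof (rule sum.cong[OF refl])
    fix L assume L: "L \<in> cuts P"
    have "tmap ncstar (Poly_Mapping.single ([std L], upper_parts P L) 1 :: 'k alg2) =
          tensor (ncstar_gen (std L)) (wprod (map ncstar_gen (upper_parts P L)))"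
      unfolding mon_def[symmetric] by (simp add: tmap_mon ncstar_mon wprod_Cons wprod_Nil wmult_unit)
    also have "\<dots> = (\<Sum>A\<in>NCs (std L). \<Sum>Bs\<in>LS (upper_parts P L). mon ([A], Bs))"
      unfolding ncstar_gen_eq wprod_expand tensor_sums by (simp add: tensor_mon)
    also have "\<dots> = (\<Sum>z\<in>NCs (std L) \<times> LS (upper_parts P L). Gf (L, (\<lambda>(B, Bs). B # Bs) z))"
      by (simp add: sum.cartesian_product Gf_def split_def)
    also have "\<dots> = (\<Sum>Cs\<in>Tset n P L. Gf (L, Cs))"
      unfolding Tset_eq[OF P(1) L]
      by (rule sum.reindex[OF inj_Cons_pair, symmetric, unfolded comp_def])
    finally show "(\<Sum>Cs\<in>Tset n P L. Gf (L, Cs) :: 'k alg2) = tmap ncstar (Poly_Mapping.single ([std L], upper_parts P L) 1)" by simp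
  qed
  also have "\<dots> = tmap ncstar (cop0_gen P)"
    unfolding cop0_gen_def linmap_sum[OF linmap_tmap] ..
  finally show ?thesis .
qed

definition allw :: "(setpart \<Rightarrow> bool) \<Rightarrow> 'k::comm_ring_1 alg \<Rightarrow> bool" where
  "allw Q x \<longleftrightarrow> (\<forall>w\<in>Poly_Mapping.keys x. \<forall>P\<in>set w. Q P)"

lemma allw_sum: "(\<And>i. i \<in> A \<Longrightarrow> allw Q (f i)) \<Longrightarrow> allw Q (sum f A)"
  unfolding allw_def using keys_sum_sub by fastforce

lemma allw_scale: "allw Q x \<Longrightarrow> allw Q (scale c x)"
  unfolding allw_def using keys_scale by fastforce

lemma allw_lin: "(\<And>w. w \<in> Poly_Mapping.keys x \<Longrightarrow> allw Q (F w)) \<Longrightarrow> allw Q (lin F x)"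
  unfolding lin_def by (rule allw_sum) (rule allw_scale, blast)

lemma allw_mon: "(\<And>P. P \<in> set w \<Longrightarrow> Q P) \<Longrightarrow> allw Q (mon w :: 'k::comm_ring_1 alg)"
  unfolding allw_def mon_def by simp

lemma allw_single: "(\<And>P. P \<in> set w \<Longrightarrow> Q P) \<Longrightarrow> allw Q (Poly_Mapping.single w c :: 'k::comm_ring_1 alg)"
  unfolding allw_def by (simp add: keys_single)

lemma allw_wmult: "allw Q a \<Longrightarrow> allw Q b \<Longrightarrow> allw Q (wmult a b)"
  unfolding wmult_def
  by (intro allw_sum allw_single) (auto simp: allw_def)

lemma allw_wprod: "(\<And>a. a \<in> set xs \<Longrightarrow> allw Q a) \<Longrightarrow> allw Q (wprod xs)"
  by (induction xs) (auto simp: wprod_Nil wprod_Cons intro!: allw_wmult allw_mon)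

lemma isnc_empty: "isnc {} {}"
  unfolding isnc_def noncrossing_def finer_def by (simp add: partition_on_empty)

lemma nc_closure_empty: "nc_closure {} = {}"
  using nc_closure_eq[of "{}" "{}" "{}"] isnc_empty by (simp add: partition_on_empty)

lemma NCs_empty: "NCs {} = {{}}"
  unfolding NCs_def is_part_of_def degree_def by (auto simp: partition_on_empty nc_closure_empty)

lemma NCs_ne: "P \<noteq> {} \<Longrightarrow> P' \<in> NCs P \<Longrightarrow> P' \<noteq> {}"
proof
  assume "P \<noteq> {}" "P' \<in> NCs P" "P' = {}"
  then have "nc_closure {} = P" unfolding NCs_def by simp
  then show False using nc_closure_empty \<open>P \<noteq> {}\<close> by simp
qed

lemma NCs_part: "P' \<in> NCs P \<Longrightarrow> is_part P'"
  unfolding NCs_def is_part_def by blast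

lemma ncstar_gen_empty: "ncstar_gen {} = mon [{}]"
  unfolding ncstar_gen_eq NCs_empty by simp

lemma allw_ncstar_gen: "allw is_part (ncstar_gen P)"
  unfolding ncstar_gen_eq by (intro allw_sum allw_mon) (auto dest: NCs_part)

lemma allw_ncstar_gen_ne: "P \<noteq> {} \<Longrightarrow> allw (\<lambda>P. is_part P \<and> P \<noteq> {}) (ncstar_gen P)"
  unfolding ncstar_gen_eq
proof (intro allw_sum allw_mon)
  fix P' Q assume "P \<noteq> {}" "P' \<in> NCs P" "Q \<in> set [P']"
  then show "is_part Q \<and> Q \<noteq> {}" using NCs_part[of P' P] NCs_ne[of P P'] by simp
qed

definition cnt :: "(setpart list \<Rightarrow> 'k) \<Rightarrow> 'k::comm_ring_1 alg \<Rightarrow> 'k" where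
  "cnt e x = (\<Sum>w\<in>Poly_Mapping.keys x. Poly_Mapping.lookup x w * e w)"

lemma counit0_cnt: "counit0 x = cnt (\<lambda>w. if (\<forall>P\<in>set w. P = {}) then 1 else 0) x"
  unfolding counit0_def cnt_def ..

lemma counit_cnt: "counit x = cnt (\<lambda>w. if w = [] then 1 else 0) x"
  unfolding counit_def cnt_def ..

lemma cnt_alt: "finite K \<Longrightarrow> Poly_Mapping.keys x \<subseteq> K \<Longrightarrow> cnt e x = (\<Sum>w\<in>K. Poly_Mapping.lookup x w * e w)"
  unfolding cnt_def by (rule sum.mono_neutral_left) (auto simp: in_keys_iff)

lemma cnt_add: "cnt e (x + y) = cnt e x + cnt e y"
proof -
  let ?K = "Poly_Mapping.keys x \<union> Poly_Mapping.keys y"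
  have f: "finite ?K" by simp
  have "cnt e (x + y) = (\<Sum>w\<in>?K. Poly_Mapping.lookup (x + y) w * e w)"
    by (rule cnt_alt[OF f]) (rule keys_add)
  also have "\<dots> = (\<Sum>w\<in>?K. Poly_Mapping.lookup x w * e w) + (\<Sum>w\<in>?K. Poly_Mapping.lookup y w * e w)"
    by (simp add: lookup_add algebra_simps sum.distrib)
  also have "\<dots> = cnt e x + cnt e y" using cnt_alt[OF f, of x e] cnt_alt[OF f, of y e] by simp
  finally show ?thesis .
qed

lemma cnt_scale: "cnt e (scale c x) = c * cnt e x"
proof -
  have "cnt e (scale c x) = (\<Sum>w\<in>Poly_Mapping.keys x. Poly_Mapping.lookup (scale c x) w * e w)"
    by (rule cnt_alt) (simp_all add: keys_scale)
  then show ?thesis unfolding cnt_def by (simp add: sum_distrib_left algebra_simps)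
qed

lemma cnt_zero: "cnt e 0 = 0" unfolding cnt_def by simp

lemma cnt_sum: "cnt e (sum f A) = (\<Sum>i\<in>A. cnt e (f i))"
proof (cases "finite A")
  case True then show ?thesis by (induction A rule: finite_induct) (simp_all add: cnt_zero cnt_add)
qed (simp add: cnt_zero)

lemma cnt_single: "cnt e (Poly_Mapping.single w c) = c * e w"
proof -
  have "cnt e (Poly_Mapping.single w c) = (\<Sum>v\<in>{w}. Poly_Mapping.lookup (Poly_Mapping.single w c) v * e v)"
    by (rule cnt_alt) auto
  then show ?thesis by simp
qed

lemma cnt_mon: "cnt e (mon w) = e w" unfolding mon_def cnt_single by simp

lemma cnt_lin: "cnt e (lin F x) = (\<Sum>w\<in>Poly_Mapping.keys x. Poly_Mapping.lookup x w * cnt e (F w))"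
  unfolding lin_def cnt_sum cnt_scale ..

lemma cnt_wmult:
  assumes em: "\<And>u v. e (u @ v) = e u * e v"
  shows "cnt e (wmult a b) = cnt e a * cnt e b"
proof -
  have "cnt e (wmult a b) = (\<Sum>u\<in>Poly_Mapping.keys a. \<Sum>v\<in>Poly_Mapping.keys b.
      Poly_Mapping.lookup a u * Poly_Mapping.lookup b v * e (u @ v))"
    unfolding wmult_def by (simp add: cnt_sum cnt_single)
  also have "\<dots> = cnt e a * cnt e b" unfolding cnt_def by (simp add: em sum_product algebra_simps)
  finally show ?thesis .
qed

lemma cnt_wprod:
  assumes em: "\<And>u v. e (u @ v) = e u * e v" and e0: "e [] = 1"
  shows "cnt e (wprod xs) = (\<Prod>a\<leftarrow>xs. cnt e a)"
  by (induction xs) (simp_all add: wprod_Nil wprod_Cons cnt_mon e0 cnt_wmult[OF em])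

lemma ncstar_eq_lin: "ncstar x = lin (\<lambda>w. wprod (map ncstar_gen w)) x"
  unfolding ncstar_def ..

lemma cnt_ncstar:
  assumes em: "\<And>u v. e (u @ v) = e u * e v" and e0: "e [] = 1"
    and eg: "\<And>P. cnt e (ncstar_gen P) = e [P]"
  shows "cnt e (ncstar x) = cnt e x"
proof -
  have ew: "cnt e (wprod (map ncstar_gen w)) = e w" for w :: "setpart list"
  proof (induction w)
    case Nil then show ?case by (simp add: wprod_Nil cnt_mon e0)
  next
    case (Cons P w)
    have "cnt e (wprod (map ncstar_gen (P # w))) = cnt e (wmult (ncstar_gen P) (wprod (map ncstar_gen w)))"
      by (simp add: wprod_Cons)
    also have "\<dots> = cnt e (ncstar_gen P) * cnt e (wprod (map ncstar_gen w))" by (rule cnt_wmult[OF em])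
    also have "\<dots> = e [P] * e w" using Cons.IH eg by simp
    also have "\<dots> = e (P # w)" using em[of "[P]" w] by simp
    finally show ?case .
  qed
  show ?thesis unfolding ncstar_eq_lin cnt_lin ew unfolding cnt_def ..
qed

lemma counit0_ncstar: "counit0 (ncstar x) = counit0 x"
  unfolding counit0_cnt
proof (rule cnt_ncstar)
  show "\<And>u v. (if \<forall>P\<in>set (u @ v). P = {} then 1 else 0) =
      (if \<forall>P\<in>set u. P = {} then 1 else (0::'a)) * (if \<forall>P\<in>set v. P = {} then 1 else 0)" by auto
  show "(if \<forall>P\<in>set []. P = {} then 1 else (0::'a)) = 1" by simp
  fix P :: setpart
  show "cnt (\<lambda>w. if \<forall>P\<in>set w. P = {} then 1 else (0::'a)) (ncstar_gen P) =
        (if \<forall>Pa\<in>set [P]. Pa = {} then 1 else 0)"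
  proof (cases "P = {}")
    case True then show ?thesis by (simp add: ncstar_gen_empty cnt_mon)
  next
    case False
    have "cnt (\<lambda>w. if \<forall>P\<in>set w. P = {} then 1 else (0::'a)) (ncstar_gen P) = 0"
      unfolding ncstar_gen_eq cnt_sum cnt_mon using NCs_ne[OF False] by (intro sum.neutral) auto
    then show ?thesis using False by simp
  qed
qed

lemma counit_ncstar: "counit (ncstar x) = counit x"
  unfolding counit_cnt
proof (rule cnt_ncstar)
  show "\<And>u v. (if u @ v = [] then 1 else 0) = (if u = [] then 1 else (0::'a)) * (if v = [] then 1 else 0)" by auto
  show "(if [] = [] then 1 else (0::'a)) = 1" by simp
  fix P :: setpart
  show "cnt (\<lambda>w. if w = [] then 1 else (0::'a)) (ncstar_gen P) = (if [P] = [] then 1 else 0)"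
    unfolding ncstar_gen_eq cnt_sum cnt_mon by simp
qed

lemma quot_ncstar_gen: "quot (ncstar_gen P) = (if P = {} then mon [] else ncstar_gen P)"
proof (cases "P = {}")
  case True then show ?thesis by (simp add: ncstar_gen_empty quot_mon)
next
  case False
  have "quot (ncstar_gen P) = (\<Sum>P'\<in>NCs P. quot (mon [P']))"
    unfolding ncstar_gen_eq by (rule linmap_sum[OF linmap_quot])
  also have "\<dots> = (\<Sum>P'\<in>NCs P. mon [P'])"
    by (rule sum.cong[OF refl]) (simp add: quot_mon NCs_ne[OF False])
  finally show ?thesis using False by (simp add: ncstar_gen_eq)
qed

lemma quot_ncstar: "quot (ncstar x) = ncstar (quot x)"
proof (rule linmap_eq_all[where x = x])
  show "linmap (\<lambda>x. quot (ncstar x))" using linmap_comp[OF linmap_quot linmap_ncstar] .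
  show "linmap (\<lambda>x. ncstar (quot x))" using linmap_comp[OF linmap_ncstar linmap_quot] .
  fix w :: "setpart list"
  show "quot (ncstar (mon w)) = ncstar (quot (mon w :: 'a alg))"
    unfolding ncstar_mon quot_mon
  proof (induction w)
    case Nil then show ?case by (simp add: wprod_Nil quot_mon)
  next
    case (Cons P w)
    show ?case
      using Cons by (simp add: wprod_Cons quot_mult quot_ncstar_gen wmult_unit)
  qed
qed

lemma cop_gen_qt2: "cop_gen P = qt2 (cop0_gen P)"
  unfolding cop_gen_def cop0_gen_def linmap_sum[OF linmap_qt2]
  by (simp add: mon_def[symmetric] qt2_mon)

lemma cop_qt2: "cop x = qt2 (cop0 x)"
proof (rule linmap_eq_all[where x = x])
  show "linmap cop" by (rule linmap_cop)
  show "linmap (\<lambda>x. qt2 (cop0 x))" using linmap_comp[OF linmap_qt2 linmap_cop0] .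
  fix w :: "setpart list"
  show "cop (mon w :: 'a alg) = qt2 (cop0 (mon w))"
    unfolding cop_mon cop0_mon
    by (induction w) (simp_all add: tprod_Nil tprod_Cons qt2_mon qt2_mult cop_gen_qt2)
qed

lemma qt2_tmap: "qt2 (tmap ncstar z) = tmap ncstar (qt2 z)"
proof (rule linmap_eq_all[where x = z])
  show "linmap (\<lambda>z. qt2 (tmap ncstar z))" using linmap_comp[OF linmap_qt2 linmap_tmap] .
  show "linmap (\<lambda>z. tmap ncstar (qt2 z))" using linmap_comp[OF linmap_tmap linmap_qt2] .
  fix w :: "setpart list \<times> setpart list"
  obtain u v where w: "w = (u, v)" by (cases w)
  show "qt2 (tmap ncstar (mon w)) = tmap ncstar (qt2 (mon w :: 'a alg2))"
    unfolding w tmap_mon qt2_mon qt2_tensor quot_ncstar by (simp add: quot_mon)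
qed

lemma cop0_ncstar_mon:
  assumes "\<And>P. P \<in> set w \<Longrightarrow> is_part P \<and> noncrossing P"
  shows "cop0 (ncstar (mon w :: 'k::comm_ring_1 alg)) = tmap ncstar (cop0 (mon w))"
  using assms
proof (induction w)
  case Nil
  then show ?case by (simp add: ncstar_mon cop0_mon wprod_Nil tprod_Nil tmap_mon tensor_mon)
next
  case (Cons P w)
  obtain n where P: "partition_on {1..n} P" "noncrossing P"
    using Cons.prems[of P] unfolding is_part_def is_part_of_def by auto
  have IH: "cop0 (wprod (map ncstar_gen w) :: 'k alg) = tmap ncstar (tprod (map cop0_gen w))"
    using Cons.IH Cons.prems by (simp add: ncstar_mon cop0_mon)
  have "cop0 (ncstar (mon (P # w)) :: 'k alg) = tmult (cop0 (ncstar_gen P :: 'k alg)) (cop0 (wprod (map ncstar_gen w)))"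
    by (simp add: ncstar_mon wprod_Cons cop0_mult)
  also have "\<dots> = tmult (tmap ncstar (cop0_gen P)) (tmap ncstar (tprod (map cop0_gen w)))"
  proof -
    have cb: "cop0 (ncstar_gen P :: 'k alg) = tmap ncstar (cop0_gen P)" by (rule core_B[OF P])
    show ?thesis unfolding cb IH ..
  qed
  also have "\<dots> = tmap ncstar (tmult (cop0_gen P) (tprod (map cop0_gen w)))"
    by (rule tmap_mult[symmetric]) (rule ncstar_mult)
  also have "\<dots> = tmap ncstar (cop0 (mon (P # w)))" by (simp add: cop0_mon tprod_Cons)
  finally show ?case .
qed

theorem mainTheorem3:
  shows "bialg_hom (Bnc :: 'k::field alg set) wmult (mon []) cop0 counit0
                   Bset wmult (mon []) cop0 counit0 ncstar
       \<and> (\<forall>x \<in> (Bnc :: 'k alg set). quot (ncstar x) = ncstar (quot x))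
       \<and> bialg_hom (Hnc :: 'k alg set) wmult (mon []) cop counit
                   Hset wmult (mon []) cop counit ncstar"
proof -
  have Bset_allw: "Bset = {x. allw is_part x}" unfolding Bset_def allw_def ..
  have Hset_allw: "Hset = {x. allw (\<lambda>P. is_part P \<and> P \<noteq> {}) x}" unfolding Hset_def allw_def ..
  have unit: "ncstar (mon []) = mon []" by (simp add: ncstar_mon wprod_Nil)
  have cop0B: "cop0 (ncstar x) = tmap ncstar (cop0 x)" if x: "x \<in> (Bnc :: 'k alg set)" for x
  proof (rule linmap_eq[where x = x])
    show "linmap (\<lambda>x. cop0 (ncstar x))" using linmap_comp[OF linmap_cop0 linmap_ncstar] .
    show "linmap (\<lambda>x. tmap ncstar (cop0 x))" using linmap_comp[OF linmap_tmap linmap_cop0] .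
    fix w assume "w \<in> Poly_Mapping.keys x"
    then show "cop0 (ncstar (mon w :: 'k alg)) = tmap ncstar (cop0 (mon w))"
      using x unfolding Bnc_def by (intro cop0_ncstar_mon) auto
  qed
  have B: "bialg_hom (Bnc :: 'k alg set) wmult (mon []) cop0 counit0 Bset wmult (mon []) cop0 counit0 ncstar"
    unfolding bialg_hom_def
  proof (intro conjI ballI allI)
    fix x :: "'k alg"
    show "ncstar x \<in> Bset" unfolding Bset_allw ncstar_eq_lin
      by (intro CollectI allw_lin allw_wprod) (auto intro: allw_ncstar_gen)
  next
    fix x y :: "'k alg"
    show "ncstar (x + y) = ncstar x + ncstar y" by (rule linmap_add[OF linmap_ncstar])
    show "ncstar (wmult x y) = wmult (ncstar x) (ncstar y)" by (rule ncstar_mult)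
  next
    fix x :: "'k alg" and c
    show "ncstar (scale c x) = scale c (ncstar x)" by (rule linmap_scale[OF linmap_ncstar])
  next
    show "ncstar (mon []) = (mon [] :: 'k alg)" by (rule unit)
  next
    fix x :: "'k alg" assume "x \<in> Bnc"
    then show "cop0 (ncstar x) = tmap ncstar (cop0 x)" by (rule cop0B)
  next
    fix x :: "'k alg"
    show "counit0 (ncstar x) = counit0 x" by (rule counit0_ncstar)
  qed
  have Q: "\<forall>x \<in> (Bnc :: 'k alg set). quot (ncstar x) = ncstar (quot x)" using quot_ncstar by blast
  have HB: "(Hnc :: 'k alg set) \<subseteq> Bnc" unfolding Hnc_def Bnc_def by blast
  have H: "bialg_hom (Hnc :: 'k alg set) wmult (mon []) cop counit Hset wmult (mon []) cop counit ncstar"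
    unfolding bialg_hom_def
  proof (intro conjI ballI allI)
    fix x :: "'k alg" assume x: "x \<in> Hnc"
    show "ncstar x \<in> Hset" unfolding Hset_allw ncstar_eq_lin
    proof (intro CollectI allw_lin allw_wprod)
      fix w a assume w: "w \<in> Poly_Mapping.keys x" and a: "a \<in> set (map ncstar_gen w)"
      then obtain P where P: "P \<in> set w" "a = ncstar_gen P" by auto
      have "P \<noteq> {}" using x w P(1) unfolding Hnc_def by blast
      then show "allw (\<lambda>P. is_part P \<and> P \<noteq> {}) a" using allw_ncstar_gen_ne P(2) by blast
    qed
  next
    fix x y :: "'k alg"
    show "ncstar (x + y) = ncstar x + ncstar y" by (rule linmap_add[OF linmap_ncstar])
    show "ncstar (wmult x y) = wmult (ncstar x) (ncstar y)" by (rule ncstar_mult)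
  next
    fix x :: "'k alg" and c
    show "ncstar (scale c x) = scale c (ncstar x)" by (rule linmap_scale[OF linmap_ncstar])
  next
    show "ncstar (mon []) = (mon [] :: 'k alg)" by (rule unit)
  next
    fix x :: "'k alg" assume "x \<in> Hnc"
    then have xB: "x \<in> Bnc" using HB by blast
    have "cop (ncstar x) = qt2 (cop0 (ncstar x))" by (rule cop_qt2)
    also have "\<dots> = qt2 (tmap ncstar (cop0 x))" using cop0B[OF xB] by simp
    also have "\<dots> = tmap ncstar (qt2 (cop0 x))" by (rule qt2_tmap)
    also have "\<dots> = tmap ncstar (cop x)" by (simp add: cop_qt2)
    finally show "cop (ncstar x) = tmap ncstar (cop x)" .
  next
    fix x :: "'k alg"
    show "counit (ncstar x) = counit x" by (rule counit_ncstar)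
  qed
  show ?thesis using B Q H by blast
qed

end
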